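(* Let $(x,y)$ and $(x',y')$ be $\mathbf{x}$-vertices of $R$. If $ax'\in\operatorname{Band}_{\mathbf{x}}(y)$, then \[ d_R((x,y),(x',y'))\le d(P_A)+2d(\bar A)+d(\bar B)+2. \]
   Context: Let $A\in\mathbb{R}^{m_1\times n_1}$, nonzero $a\in\mathbb{R}^{1\times n_1}$, nonzero $b\in\mathbb{R}^{1\times n_2}$, $B\in\mathbb{R}^{m_2\times n_2}$, $c_A\in\mathbb{R}^{m_1}$, $c_B\in\mathbb{R}^{m_2}$, $c_a,c_b\in\mathbb{R}$, and $R=\{(x,y)\in\mathbb{R}^{n_1}\times\mathbb{R}^{n_2}: Ax=c_A,\ ax+by=c_a+c_b,\ By=c_B,\ x,y\ge 0\}$. Assume $R$ is simple (nondegenerate). Let $P_A=\{x: Ax=c_A, x\ge 0\}$, $\bar A=\begin{bmatrix}A\\ a\end{bmatrix}$, $\bar B=\begin{bmatrix}b\\ B\end{bmatrix}$. A vertex $(x,y)$ of $R$ is an $\mathbf{x}$-vertex if $x$ is a vertex of $P_A$; for such a vertex, $\operatorname{Band}_{\mathbf{x}}(y):=\{c_a+c_b-bz : Bz=c_B,\ \operatorname{supp}(z)\subseteq\operatorname{supp}(y),\ z\ge 0\}$, where $\operatorname{supp}$ is the set of indices of nonzero coordinates. $d_R(v,w)$ is the minimum number of edges of an edge walk in $R$ from $v$ to $w$. For a polyhedron $P$, $d(P)$ is its combinatorial diameter, and for a matrix $M\in\mathbb{R}^{m\times n}$, $d(M):=\max\{d(\{z: Mz=r, z\ge 0\}): r\in\mathbb{R}^m\}$.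 *)

theory Defs
  imports "HOL-Analysis.Analysis" "HOL-Library.Extended_Nat"
begin

definition vertex_of :: "'a::euclidean_space \<Rightarrow> 'a set \<Rightarrow> bool" where
  "vertex_of v P \<longleftrightarrow> v extreme_point_of P"

definition adjacent_in :: "'a::euclidean_space set \<Rightarrow> 'a \<Rightarrow> 'a \<Rightarrow> bool" where
  "adjacent_in P v w \<longleftrightarrow> vertex_of v P \<and> vertex_of w P \<and> v \<noteq> w
      \<and> closed_segment v w edge_of P"

definition edge_walk :: "'a::euclidean_space set \<Rightarrow> nat \<Rightarrow> 'a \<Rightarrow> 'a \<Rightarrow> bool" where
  "edge_walk P k v w \<longleftrightarrow> (\<exists>p :: nat \<Rightarrow> 'a. p 0 = v \<and> p k = w \<and> vertex_of v P
      \<and> (\<forall>i<k. adjacent_in P (p i) (p (Suc i))))"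

definition edge_dist :: "'a::euclidean_space set \<Rightarrow> 'a \<Rightarrow> 'a \<Rightarrow> enat" where
  "edge_dist P v w = (INF k \<in> {k. edge_walk P k v w}. enat k)"

definition comb_diam :: "'a::euclidean_space set \<Rightarrow> enat" where
  "comb_diam P = (SUP v \<in> {v. vertex_of v P}. SUP w \<in> {w. vertex_of w P}. edge_dist P v w)"

definition nonneg :: "real ^ 'n \<Rightarrow> bool" where
  "nonneg z \<longleftrightarrow> (\<forall>i. 0 \<le> z $ i)"

definition supp :: "real ^ 'n \<Rightarrow> 'n set" where
  "supp z = {i. z $ i \<noteq> 0}"

definition std_poly :: "real ^ 'n ^ 'm \<Rightarrow> real ^ 'm \<Rightarrow> (real ^ 'n) set" where
  "std_poly M r = {z. M *v z = r \<and> nonneg z}"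

definition mat_diam :: "real ^ 'n ^ 'm \<Rightarrow> enat" where
  "mat_diam M = (SUP r. comb_diam (std_poly M r))"

text \<open>Used for Abar = [A; a] and Bbar = [b; B]; the order of rows
  does not affect the polyhedra {z : M z = r, z >= 0} as r ranges over all vectors.\<close>
definition stack_row :: "real ^ 'n ^ 'm \<Rightarrow> real ^ 'n \<Rightarrow> real ^ 'n ^ ('m option)" where
  "stack_row M c = (\<chi> i. case i of None \<Rightarrow> c | Some j \<Rightarrow> M $ j)"

definition simple_polyhedron :: "'a::euclidean_space set \<Rightarrow> bool" where
  "simple_polyhedron P \<longleftrightarrow> polyhedron P \<and>
     (\<forall>v. vertex_of v P \<longrightarrow> card {F. F facet_of P \<and> v \<in> F} = nat (aff_dim P))"

definition Rpoly :: "real ^ 'n1 ^ 'm1 \<Rightarrow> real ^ 'n1 \<Rightarrow> real ^ 'n2 \<Rightarrow> real ^ 'n2 ^ 'm2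
    \<Rightarrow> real ^ 'm1 \<Rightarrow> real ^ 'm2 \<Rightarrow> real \<Rightarrow> real \<Rightarrow> ((real ^ 'n1) \<times> (real ^ 'n2)) set" where
  "Rpoly A a b B cA cB ca cb = {(x, y). A *v x = cA \<and> a \<bullet> x + b \<bullet> y = ca + cb
      \<and> B *v y = cB \<and> nonneg x \<and> nonneg y}"

definition x_vertex :: "((real ^ 'n1) \<times> (real ^ 'n2)) set \<Rightarrow> real ^ 'n1 ^ 'm1 \<Rightarrow> real ^ 'm1
    \<Rightarrow> (real ^ 'n1) \<times> (real ^ 'n2) \<Rightarrow> bool" where
  "x_vertex R A cA v \<longleftrightarrow> vertex_of v R \<and> vertex_of (fst v) (std_poly A cA)"

definition Band_x :: "real ^ 'n2 \<Rightarrow> real ^ 'n2 ^ 'm2 \<Rightarrow> real ^ 'm2 \<Rightarrow> real \<Rightarrow> real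
    \<Rightarrow> real ^ 'n2 \<Rightarrow> real set" where
  "Band_x b B cB ca cb y = {ca + cb - b \<bullet> z | z. B *v z = cB \<and> supp z \<subseteq> supp y \<and> nonneg z}"

end

theory Submission
  imports Defs
begin


lemma edge_walk_0: "edge_walk P 0 v w \<longleftrightarrow> v = w \<and> vertex_of v P"
  unfolding edge_walk_def by auto

lemma adjacent_sym: "adjacent_in P v w \<Longrightarrow> adjacent_in P w v"
  unfolding adjacent_in_def by (auto simp: closed_segment_commute)

lemma edge_walk_end_vertex:
  assumes "edge_walk P k v w" shows "vertex_of w P"
proof -
  obtain p where p: "p 0 = v" "p k = w" "vertex_of v P" "\<forall>i<k. adjacent_in P (p i) (p (Suc i))"
    using assms unfolding edge_walk_def by blast
  show ?thesis
  proof (cases k)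
    case 0 then show ?thesis using p by simp
  next
    case (Suc j)
    then have "adjacent_in P (p j) (p k)" using p(4) by auto
    then show ?thesis using p(2) unfolding adjacent_in_def by simp
  qed
qed

lemma edge_walk_append:
  assumes "edge_walk P k1 u v" "edge_walk P k2 v w"
  shows "edge_walk P (k1 + k2) u w"
proof -
  obtain p where p: "p 0 = u" "p k1 = v" "vertex_of u P" "\<forall>i<k1. adjacent_in P (p i) (p (Suc i))"
    using assms(1) unfolding edge_walk_def by blast
  obtain q where q: "q 0 = v" "q k2 = w" "vertex_of v P" "\<forall>i<k2. adjacent_in P (q i) (q (Suc i))"
    using assms(2) unfolding edge_walk_def by blast
  define r where "r = (\<lambda>i. if i \<le> k1 then p i else q (i - k1))"
  have "\<forall>i<k1+k2. adjacent_in P (r i) (r (Suc i))"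
  proof (intro allI impI)
    fix i assume i: "i < k1 + k2"
    show "adjacent_in P (r i) (r (Suc i))"
    proof (cases "i < k1")
      case True then show ?thesis using p(4) by (simp add: r_def)
    next
      case False
      then have "i - k1 < k2" "Suc i - k1 = Suc (i - k1)" using i by auto
      then show ?thesis using q(4) False p(2) q(1) by (auto simp: r_def)
    qed
  qed
  moreover have "r 0 = u" "r (k1+k2) = w"
    using p q by (auto simp: r_def)
  ultimately show ?thesis unfolding edge_walk_def using p(3) by blast
qed

lemma edge_dist_le_walk: "edge_walk P k v w \<Longrightarrow> edge_dist P v w \<le> enat k"
  unfolding edge_dist_def by (rule INF_lower2[of k]) auto

lemma edge_dist_walk:
  assumes "edge_dist P v w \<le> enat n"
  shows "\<exists>k\<le>n. edge_walk P k v w"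
proof -
  let ?K = "{k. edge_walk P k v w}"
  have ne: "?K \<noteq> {}"
  proof
    assume "?K = {}"
    then have "edge_dist P v w = \<infinity>" unfolding edge_dist_def by (simp add: Inf_enat_def)
    then show False using assms by simp
  qed
  have ne2: "enat ` ?K \<noteq> {}" using ne by blast
  have ex: "\<exists>x. x \<in> enat ` ?K" using ne2 by blast
  have "Inf (enat ` ?K) = (LEAST x. x \<in> enat ` ?K)"
    using ne2 by (simp only: Inf_enat_def if_False)
  also have "\<dots> \<in> enat ` ?K" by (rule LeastI_ex[OF ex])
  finally have "edge_dist P v w \<in> enat ` ?K"
    unfolding edge_dist_def by (simp only: image_ident)
  then obtain k where "k \<in> ?K" "edge_dist P v w = enat k" by auto
  then show ?thesis using assms by auto
qed

lemma edge_dist_tri: "edge_dist P u w \<le> edge_dist P u v + edge_dist P v w"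
proof (cases "edge_dist P u v = \<infinity> \<or> edge_dist P v w = \<infinity>")
  case True then show ?thesis by auto
next
  case False
  then obtain n1 n2 where n: "edge_dist P u v = enat n1" "edge_dist P v w = enat n2"
    by (metis enat.exhaust)
  obtain k1 where "k1 \<le> n1" "edge_walk P k1 u v" using edge_dist_walk[of P u v n1] n by auto
  moreover obtain k2 where "k2 \<le> n2" "edge_walk P k2 v w" using edge_dist_walk[of P v w n2] n by auto
  ultimately have "edge_dist P u w \<le> enat (k1 + k2)"
    by (intro edge_dist_le_walk edge_walk_append) 
  also have "\<dots> \<le> enat (n1 + n2)" using \<open>k1 \<le> n1\<close> \<open>k2 \<le> n2\<close> by simp
  finally show ?thesis using n by simp
qed

lemma edge_dist_refl: "vertex_of v P \<Longrightarrow> edge_dist P v v = 0"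
proof -
  assume "vertex_of v P"
  then have "edge_dist P v v \<le> enat 0" using edge_dist_le_walk[of P 0 v v] by (simp add: edge_walk_0)
  then show ?thesis by (simp add: zero_enat_def[symmetric])
qed

lemma edge_dist_one:
  assumes v: "vertex_of v P" and h: "v = w \<or> adjacent_in P v w"
  shows "edge_dist P v w \<le> 1"
proof (cases "v = w")
  case True then show ?thesis using edge_dist_refl[OF v] by simp
next
  case False
  then have adj: "adjacent_in P v w" using h by simp
  have "edge_walk P 1 v w"
    unfolding edge_walk_def
    by (rule exI[of _ "\<lambda>i. if i = 0 then v else w"]) (use v adj in auto)
  then show ?thesis using edge_dist_le_walk[of P 1 v w] by (simp add: one_enat_def)
qed

lemma extreme_affine_image:
  fixes L :: "'a::euclidean_space \<Rightarrow> 'b::euclidean_space"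
  assumes "linear L" "inj L"
  shows "(L v + c) extreme_point_of ((\<lambda>u. L u + c) ` P) \<longleftrightarrow> v extreme_point_of P"
proof -
  have e: "(\<lambda>u. L u + c) ` X = (+) c ` (L ` X)" for X by (auto simp: image_image add.commute)
  have s: "{L v + c} = (+) c ` (L ` {v})" by (simp add: add.commute)
  have "(L v + c) extreme_point_of ((\<lambda>u. L u + c) ` P) \<longleftrightarrow> {L v + c} face_of (\<lambda>u. L u + c) ` P"
    by (simp only: face_of_singleton)
  also have "\<dots> \<longleftrightarrow> (+) c ` (L ` {v}) face_of (+) c ` (L ` P)"
    by (simp only: e s)
  also have "\<dots> \<longleftrightarrow> L ` {v} face_of L ` P" by (rule face_of_translation_eq)
  also have "\<dots> \<longleftrightarrow> {v} face_of P" by (rule face_of_linear_image[OF assms])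
  finally show ?thesis by (simp only: face_of_singleton)
qed



lemma aff_dim_seg: "aff_dim (closed_segment (v::'a::euclidean_space) w) = (if v = w then 0 else 1)"
  by (simp add: segment_convex_hull aff_dim_convex_hull)

lemma edge_of_seg: "closed_segment (v::'a::euclidean_space) w edge_of S \<longleftrightarrow> closed_segment v w face_of S \<and> v \<noteq> w"
  by (simp add: edge_of_def aff_dim_seg)

lemma adjacent_in_alt: "adjacent_in P v w \<longleftrightarrow> vertex_of v P \<and> vertex_of w P \<and> v \<noteq> w \<and> closed_segment v w face_of P"
  unfolding adjacent_in_def edge_of_seg by blast

lemma face_affine_image:
  fixes L :: "'a::euclidean_space \<Rightarrow> 'b::euclidean_space"
  assumes "linear L" "inj L"
  shows "(\<lambda>u. L u + c) ` X face_of (\<lambda>u. L u + c) ` P \<longleftrightarrow> X face_of P"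
proof -
  have e: "(\<lambda>u. L u + c) ` X = (+) c ` (L ` X)" for X by (auto simp: image_image add.commute)
  have "(\<lambda>u. L u + c) ` X face_of (\<lambda>u. L u + c) ` P \<longleftrightarrow> (+) c ` (L ` X) face_of (+) c ` (L ` P)"
    by (simp only: e)
  also have "\<dots> \<longleftrightarrow> L ` X face_of L ` P" by (rule face_of_translation_eq)
  also have "\<dots> \<longleftrightarrow> X face_of P" by (rule face_of_linear_image[OF assms])
  finally show ?thesis .
qed

lemma seg_affine_image:
  fixes L :: "'a::euclidean_space \<Rightarrow> 'b::euclidean_space"
  assumes "linear L"
  shows "closed_segment (L v + c) (L w + c) = (\<lambda>u. L u + c) ` closed_segment v w"
proof -
  have "closed_segment (L v + c) (L w + c) = closed_segment (c + L v) (c + L w)" by (simp add: add.commute)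
  also have "\<dots> = (\<lambda>x. c + x) ` closed_segment (L v) (L w)" by (rule closed_segment_translation)
  also have "\<dots> = (\<lambda>x. c + x) ` (L ` closed_segment v w)" by (simp only: closed_segment_linear_image[OF assms])
  also have "\<dots> = (\<lambda>u. L u + c) ` closed_segment v w" by (auto simp: image_image add.commute)
  finally show ?thesis .
qed

lemma vertex_face: "F face_of Q \<Longrightarrow> vertex_of v F \<Longrightarrow> vertex_of v Q"
  unfolding vertex_of_def using extreme_point_of_face by blast

lemma vertex_face_iff: "F face_of Q \<Longrightarrow> v \<in> F \<Longrightarrow> vertex_of v F \<longleftrightarrow> vertex_of v Q"
  unfolding vertex_of_def using extreme_point_of_face by blast

lemma adjacent_face: "F face_of Q \<Longrightarrow> adjacent_in F v w \<Longrightarrow> adjacent_in Q v w"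
  unfolding adjacent_in_alt using vertex_face face_of_trans by blast

lemma walk_face: 
  assumes "F face_of Q" "edge_walk F k v w" shows "edge_walk Q k v w"
  using assms unfolding edge_walk_def using vertex_face adjacent_face by metis

lemma dist_face: 
  assumes "F face_of Q" shows "edge_dist Q v w \<le> edge_dist F v w"
  unfolding edge_dist_def using walk_face[OF assms] by (auto intro!: INF_mono)

lemma vertex_affine:
  fixes L :: "'a::euclidean_space \<Rightarrow> 'b::euclidean_space"
  assumes "linear L" "inj L"
  shows "vertex_of (L v + c) ((\<lambda>u. L u + c) ` P) \<longleftrightarrow> vertex_of v P"
  unfolding vertex_of_def by (rule extreme_affine_image[OF assms])

lemma adjacent_affine:
  fixes L :: "'a::euclidean_space \<Rightarrow> 'b::euclidean_space"
  assumes "linear L" "inj L" "adjacent_in P v w"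
  shows "adjacent_in ((\<lambda>u. L u + c) ` P) (L v + c) (L w + c)"
proof -
  have "L v \<noteq> L w" using assms(2,3) unfolding adjacent_in_alt inj_def by blast
  then show ?thesis using assms(3) unfolding adjacent_in_alt
    by (simp add: vertex_affine[OF assms(1,2)] seg_affine_image[OF assms(1)] face_affine_image[OF assms(1,2)])
qed

lemma walk_affine:
  fixes L :: "'a::euclidean_space \<Rightarrow> 'b::euclidean_space"
  assumes "linear L" "inj L" "(\<lambda>u. L u + c) ` P face_of Q" "edge_walk P k v w"
  shows "edge_walk Q k (L v + c) (L w + c)"
proof -
  obtain p where p: "p 0 = v" "p k = w" "vertex_of v P" "\<forall>i<k. adjacent_in P (p i) (p (Suc i))"
    using assms(4) unfolding edge_walk_def by blast
  have "edge_walk ((\<lambda>u. L u + c) ` P) k (L v + c) (L w + c)"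
    unfolding edge_walk_def
    by (rule exI[of _ "\<lambda>i. L (p i) + c"])
       (use p vertex_affine[OF assms(1,2)] adjacent_affine[OF assms(1,2)] in auto)
  then show ?thesis using walk_face[OF assms(3)] by blast
qed

lemma dist_affine:
  fixes L :: "'a::euclidean_space \<Rightarrow> 'b::euclidean_space"
  assumes "linear L" "inj L" "(\<lambda>u. L u + c) ` P face_of Q"
  shows "edge_dist Q (L v + c) (L w + c) \<le> edge_dist P v w"
  unfolding edge_dist_def using walk_affine[OF assms] by (auto intro!: INF_mono)

lemma vertex_subset: "vertex_of v P \<Longrightarrow> v \<in> S \<Longrightarrow> S \<subseteq> P \<Longrightarrow> vertex_of v S"
  unfolding vertex_of_def extreme_point_of_def by blast

lemma vertex_in: "vertex_of v P \<Longrightarrow> v \<in> P"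
  unfolding vertex_of_def extreme_point_of_def by blast



context
  fixes d :: "'a \<Rightarrow> 'a \<Rightarrow> enat"
  assumes tri: "\<And>a b c. d a c \<le> d a b + d b c"
begin

lemma tri_le:
  assumes "d a b \<le> enat m" "d b c \<le> enat n"
  shows "d a c \<le> enat (m + n)"
proof -
  have "d a c \<le> d a b + d b c" by (rule tri)
  also have "\<dots> \<le> enat m + enat n" using assms(1,2) by (rule add_mono)
  finally show ?thesis by simp
qed

lemma inside_path:
  assumes refl: "\<And>i. i \<le> k \<Longrightarrow> I i \<Longrightarrow> d (p i) (p i) = 0"
    and II: "\<And>i. i < k \<Longrightarrow> I i \<Longrightarrow> I (Suc i) \<Longrightarrow> d (p i) (p (Suc i)) \<le> 1"
  shows "m \<le> n \<Longrightarrow> n \<le> k \<Longrightarrow> (\<forall>j. m \<le> j \<and> j \<le> n \<longrightarrow> I j) \<Longrightarrow> d (p m) (p n) \<le> enat (n - m)"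
proof (induction n)
  case 0
  then show ?case using refl[of 0] by (simp add: zero_enat_def)
next
  case (Suc n)
  show ?case
  proof (cases "m = Suc n")
    case True then show ?thesis using refl[of "Suc n"] Suc.prems by (simp add: zero_enat_def)
  next
    case False
    then have h: "m \<le> n" using Suc.prems by simp
    have a: "d (p m) (p n) \<le> enat (n - m)" using Suc.IH Suc.prems h by simp
    have b: "d (p n) (p (Suc n)) \<le> enat 1" using II[of n] Suc.prems h by (simp add: one_enat_def)
    have "d (p m) (p (Suc n)) \<le> enat (n - m + 1)" by (rule tri_le[OF a b])
    then show ?thesis using h by (simp add: Suc_diff_le)
  qed
qed

lemma cross_part:
  assumes refl: "\<And>i. i \<le> k \<Longrightarrow> I i \<Longrightarrow> d (p i) (p i) = 0"
    and II: "\<And>i. i < k \<Longrightarrow> I i \<Longrightarrow> I (Suc i) \<Longrightarrow> d (p i) (p (Suc i)) \<le> 1"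
    and part: "\<And>i. i \<le> k \<Longrightarrow> I i \<or> X i \<or> Y i"
    and exXY: "\<And>i. X i \<Longrightarrow> \<not> Y i" and exIX: "\<And>i. X i \<Longrightarrow> \<not> I i"
    and IY: "\<And>i. i < k \<Longrightarrow> I i \<Longrightarrow> Y (Suc i) \<Longrightarrow> \<exists>q\<in>VY. d (p i) q \<le> 1"
    and XI: "\<And>i. i < k \<Longrightarrow> X i \<Longrightarrow> I (Suc i) \<Longrightarrow> \<exists>q\<in>VX. d q (p (Suc i)) \<le> 1"
    and XY: "\<And>i. i < k \<Longrightarrow> X i \<Longrightarrow> Y (Suc i) \<Longrightarrow> \<exists>q1\<in>VX. \<exists>q2\<in>VY. d q1 q2 \<le> 1"
    and XX: "\<And>q q'. q \<in> VX \<Longrightarrow> q' \<in> VX \<Longrightarrow> d q q' \<le> enat D"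
    and YY: "\<And>q q'. q \<in> VY \<Longrightarrow> q' \<in> VY \<Longrightarrow> d q q' \<le> enat D"
    and e: "X e" and l: "Y l" "e < l" "l \<le> k"
    and q1: "q1 \<in> VX" and q2: "q2 \<in> VY"
  shows "d q1 q2 \<le> enat (2 * D + (l - e))"
proof -
  define t where "t = (LEAST j. e < j \<and> Y j)"
  have t1: "e < t \<and> Y t" unfolding t_def by (rule LeastI[of _ l]) (use l in simp)
  have t2: "t \<le> l" unfolding t_def by (rule Least_le) (use l in simp)
  have t3: "\<And>j. e < j \<Longrightarrow> j < t \<Longrightarrow> \<not> Y j" unfolding t_def using not_less_Least by blast
  define s where "s = (GREATEST j. j < t \<and> \<not> I j)"
  have ne: "e < t \<and> \<not> I e" using t1 e exIX by blast
  have bd: "\<And>j. j < t \<and> \<not> I j \<Longrightarrow> j \<le> t" by auto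
  have s1: "s < t \<and> \<not> I s" unfolding s_def by (rule GreatestI_nat[of "\<lambda>j. j < t \<and> \<not> I j", OF ne bd])
  have s2: "e \<le> s" unfolding s_def by (rule Greatest_le_nat[of "\<lambda>j. j < t \<and> \<not> I j", OF ne bd])
  have s3: "\<And>j. s < j \<Longrightarrow> j < t \<Longrightarrow> I j"
  proof (rule ccontr)
    fix j assume "s < j" "j < t" "\<not> I j"
    have "j \<le> s" unfolding s_def by (rule Greatest_le_nat[of "\<lambda>j. j < t \<and> \<not> I j", OF _ bd]) (use \<open>j < t\<close> \<open>\<not> I j\<close> in auto)
    then show False using \<open>s < j\<close> by simp
  qed
  have Xs: "X s"
  proof (cases "s = e")
    case True then show ?thesis using e by simp
  next
    case False
    then have "\<not> Y s" using t3[of s] s1 s2 by simp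
    then show ?thesis using part[of s] s1 t2 l by auto
  qed
  have sk: "s < k" using s1 t2 l by simp
  show ?thesis
  proof (cases "t = Suc s")
    case True
    then obtain r1 r2 where r: "r1 \<in> VX" "r2 \<in> VY" "d r1 r2 \<le> 1"
      using XY[OF sk Xs] t1 by auto
    have "d q1 r1 \<le> enat D" using XX q1 r by simp
    moreover have "d r1 r2 \<le> enat 1" using r by (simp add: one_enat_def)
    moreover have "d r2 q2 \<le> enat D" using YY q2 r by simp
    ultimately have "d q1 q2 \<le> enat (D + 1 + D)" by (meson tri_le)
    then show ?thesis by (rule order_trans) (use l in simp)
  next
    case False
    then have st: "Suc s < t" using s1 by simp
    have Is: "I (Suc s)" using s3[of "Suc s"] st by simp
    obtain r1 where r1: "r1 \<in> VX" "d r1 (p (Suc s)) \<le> 1" using XI[OF sk Xs Is] by auto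
    have It: "I (t - 1)" using s3[of "t - 1"] st by simp
    have tk: "t - 1 < k" using t2 l by simp
    obtain r2 where r2: "r2 \<in> VY" "d (p (t - 1)) r2 \<le> 1"
      using IY[OF tk It] t1 st by (metis Suc_pred' less_zeroE not_gr_zero)
    have m: "d (p (Suc s)) (p (t - 1)) \<le> enat (t - 1 - Suc s)"
      by (rule inside_path[where I=I and p=p and k=k, OF refl II]) (use st t2 l s3 in auto)
    have "d q1 r1 \<le> enat D" using XX q1 r1 by simp
    moreover have "d r1 (p (Suc s)) \<le> enat 1" using r1 by (simp add: one_enat_def)
    moreover note m
    moreover have "d (p (t - 1)) r2 \<le> enat 1" using r2 by (simp add: one_enat_def)
    moreover have "d r2 q2 \<le> enat D" using YY q2 r2 by simp
    ultimately have "d q1 q2 \<le> enat (D + 1 + (t - 1 - Suc s) + 1 + D)" by (meson tri_le)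
    then show ?thesis by (rule order_trans) (use st t2 s2 in simp)
  qed
qed

lemma comb_slab:
  assumes refl: "\<And>i. i \<le> k \<Longrightarrow> I i \<Longrightarrow> d (p i) (p i) = 0"
    and part: "\<And>i. i \<le> k \<Longrightarrow> I i \<or> U i \<or> L i"
    and exIU: "\<And>i. I i \<Longrightarrow> \<not> U i" and exIL: "\<And>i. I i \<Longrightarrow> \<not> L i"
    and exUL: "\<And>i. U i \<Longrightarrow> \<not> L i"
    and II: "\<And>i. i < k \<Longrightarrow> I i \<Longrightarrow> I (Suc i) \<Longrightarrow> d (p i) (p (Suc i)) \<le> 1"
    and IU: "\<And>i. i < k \<Longrightarrow> I i \<Longrightarrow> U (Suc i) \<Longrightarrow> \<exists>q\<in>VU. d (p i) q \<le> 1"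
    and UI: "\<And>i. i < k \<Longrightarrow> U i \<Longrightarrow> I (Suc i) \<Longrightarrow> \<exists>q\<in>VU. d q (p (Suc i)) \<le> 1"
    and IL: "\<And>i. i < k \<Longrightarrow> I i \<Longrightarrow> L (Suc i) \<Longrightarrow> \<exists>q\<in>VL. d (p i) q \<le> 1"
    and LI: "\<And>i. i < k \<Longrightarrow> L i \<Longrightarrow> I (Suc i) \<Longrightarrow> \<exists>q\<in>VL. d q (p (Suc i)) \<le> 1"
    and UL: "\<And>i. i < k \<Longrightarrow> U i \<Longrightarrow> L (Suc i) \<Longrightarrow> \<exists>q1\<in>VU. \<exists>q2\<in>VL. d q1 q2 \<le> 1"
    and LU: "\<And>i. i < k \<Longrightarrow> L i \<Longrightarrow> U (Suc i) \<Longrightarrow> \<exists>q1\<in>VL. \<exists>q2\<in>VU. d q1 q2 \<le> 1"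
    and UU: "\<And>q q'. q \<in> VU \<Longrightarrow> q' \<in> VU \<Longrightarrow> d q q' \<le> enat D"
    and LL: "\<And>q q'. q \<in> VL \<Longrightarrow> q' \<in> VL \<Longrightarrow> d q q' \<le> enat D"
    and I0: "I 0" and Ik: "I k"
  shows "d (p 0) (p k) \<le> enat (k + 2 * D)"
proof (cases "\<forall>j. 0 \<le> j \<and> j \<le> k \<longrightarrow> I j")
  case True
  then have "d (p 0) (p k) \<le> enat (k - 0)" by (intro inside_path[where I=I and p=p and k=k, OF refl II]) auto
  then show ?thesis by (rule order_trans) simp
next
  case False
  then obtain i0 where i0: "i0 \<le> k" "\<not> I i0" by auto
  define e where "e = (LEAST i. \<not> I i)"
  have e1: "\<not> I e" unfolding e_def by (rule LeastI[of _ i0]) (use i0 in simp)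
  have e2: "e \<le> i0" unfolding e_def by (rule Least_le) (use i0 in simp)
  have e3: "\<And>j. j < e \<Longrightarrow> I j" unfolding e_def using not_less_Least by blast
  have e0: "0 < e" using e1 I0 by (cases e) auto
  define l where "l = (GREATEST i. i \<le> k \<and> \<not> I i)"
  have ne: "i0 \<le> k \<and> \<not> I i0" using i0 by simp
  have bd: "\<And>j. j \<le> k \<and> \<not> I j \<Longrightarrow> j \<le> k" by auto
  have l1: "l \<le> k \<and> \<not> I l" unfolding l_def by (rule GreatestI_nat[of "\<lambda>j. j \<le> k \<and> \<not> I j", OF ne bd])
  have l2: "i0 \<le> l" unfolding l_def by (rule Greatest_le_nat[of "\<lambda>j. j \<le> k \<and> \<not> I j", OF ne bd])
  have l3: "\<And>j. l < j \<Longrightarrow> j \<le> k \<Longrightarrow> I j"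
  proof (rule ccontr)
    fix j assume "l < j" "j \<le> k" "\<not> I j"
    have "j \<le> l" unfolding l_def by (rule Greatest_le_nat[of "\<lambda>j. j \<le> k \<and> \<not> I j", OF _ bd]) (use \<open>j \<le> k\<close> \<open>\<not> I j\<close> in auto)
    then show False using \<open>l < j\<close> by simp
  qed
  have lk: "l < k" using l1 Ik by (cases "l = k") auto
  have el: "e \<le> l" using e2 l2 by simp
  have ek: "e - 1 < k" using el lk by simp
  have Ie: "I (e - 1)" using e3 e0 by simp
  have Se: "Suc (e - 1) = e" using e0 by simp
  have Il: "I (Suc l)" using l3 lk by simp
  have p0: "d (p 0) (p (e - 1)) \<le> enat (e - 1 - 0)"
    by (rule inside_path[where I=I and p=p and k=k, OF refl II]) (use e3 ek e0 in auto)
  have pk: "d (p (Suc l)) (p k) \<le> enat (k - Suc l)"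
    by (rule inside_path[where I=I and p=p and k=k, OF refl II]) (use l3 lk in auto)
  have exitU: "U e \<Longrightarrow> \<exists>q\<in>VU. d (p 0) q \<le> enat e"
  proof -
    assume "U e"
    then obtain q where q: "q \<in> VU" "d (p (e - 1)) q \<le> enat 1"
      using IU[OF ek Ie] Se by (auto simp: one_enat_def)
    have "d (p 0) q \<le> enat (e - 1 - 0 + 1)" by (rule tri_le[OF p0 q(2)])
    then show ?thesis using q e0 by auto
  qed
  have exitL: "L e \<Longrightarrow> \<exists>q\<in>VL. d (p 0) q \<le> enat e"
  proof -
    assume "L e"
    then obtain q where q: "q \<in> VL" "d (p (e - 1)) q \<le> enat 1"
      using IL[OF ek Ie] Se by (auto simp: one_enat_def)
    have "d (p 0) q \<le> enat (e - 1 - 0 + 1)" by (rule tri_le[OF p0 q(2)])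
    then show ?thesis using q e0 by auto
  qed
  have entU: "U l \<Longrightarrow> \<exists>q\<in>VU. d q (p k) \<le> enat (k - l)"
  proof -
    assume "U l"
    then obtain q where q: "q \<in> VU" "d q (p (Suc l)) \<le> enat 1"
      using UI[OF lk _ Il] by (auto simp: one_enat_def)
    have "d q (p k) \<le> enat (1 + (k - Suc l))" by (rule tri_le[OF q(2) pk])
    then show ?thesis using q lk by (auto simp: Suc_diff_Suc)
  qed
  have entL: "L l \<Longrightarrow> \<exists>q\<in>VL. d q (p k) \<le> enat (k - l)"
  proof -
    assume "L l"
    then obtain q where q: "q \<in> VL" "d q (p (Suc l)) \<le> enat 1"
      using LI[OF lk _ Il] by (auto simp: one_enat_def)
    have "d q (p k) \<le> enat (1 + (k - Suc l))" by (rule tri_le[OF q(2) pk])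
    then show ?thesis using q lk by (auto simp: Suc_diff_Suc)
  qed
  have ue: "U e \<or> L e" using part[of e] e1 el lk by auto
  have ul: "U l \<or> L l" using part[of l] l1 by auto
  from ue ul show ?thesis
  proof (elim disjE)
    assume "U e" "U l"
    then obtain q1 q2 where q: "q1 \<in> VU" "d (p 0) q1 \<le> enat e" "q2 \<in> VU" "d q2 (p k) \<le> enat (k - l)"
      using exitU entU by blast
    have "d (p 0) (p k) \<le> enat (e + D + (k - l))"
      by (rule tri_le[OF tri_le[OF q(2) UU[OF q(1,3)]] q(4)])
    then show ?thesis by (rule order_trans) (use el lk in simp)
  next
    assume "L e" "L l"
    then obtain q1 q2 where q: "q1 \<in> VL" "d (p 0) q1 \<le> enat e" "q2 \<in> VL" "d q2 (p k) \<le> enat (k - l)"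
      using exitL entL by blast
    have "d (p 0) (p k) \<le> enat (e + D + (k - l))"
      by (rule tri_le[OF tri_le[OF q(2) LL[OF q(1,3)]] q(4)])
    then show ?thesis by (rule order_trans) (use el lk in simp)
  next
    assume a: "U e" "L l"
    then have el': "e < l" using el exUL by (cases "e = l") auto
    obtain q1 q2 where q: "q1 \<in> VU" "d (p 0) q1 \<le> enat e" "q2 \<in> VL" "d q2 (p k) \<le> enat (k - l)"
      using exitU entL a by blast
    have c: "d q1 q2 \<le> enat (2 * D + (l - e))"
      by (rule cross_part[where X=U and Y=L and I=I and p=p and k=k, OF refl II _ exUL _ IL UI UL UU LL a(1) a(2) el' _ q(1) q(3)])
         (use part lk exIU in auto)
    have "d (p 0) (p k) \<le> enat (e + (2 * D + (l - e)) + (k - l))"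
      by (rule tri_le[OF tri_le[OF q(2) c] q(4)])
    then show ?thesis by (rule order_trans) (use el lk in simp)
  next
    assume a: "L e" "U l"
    then have el': "e < l" using el exUL by (cases "e = l") auto
    obtain q1 q2 where q: "q1 \<in> VL" "d (p 0) q1 \<le> enat e" "q2 \<in> VU" "d q2 (p k) \<le> enat (k - l)"
      using exitL entU a by blast
    have c: "d q1 q2 \<le> enat (2 * D + (l - e))"
      by (rule cross_part[where X=L and Y=U and I=I and p=p and k=k, OF refl II _ _ _ IU LI LU LL UU a(1) a(2) el' _ q(1) q(3)])
         (use part lk exUL exIL in auto)
    have "d (p 0) (p k) \<le> enat (e + (2 * D + (l - e)) + (k - l))"
      by (rule tri_le[OF tri_le[OF q(2) c] q(4)])
    then show ?thesis by (rule order_trans) (use el lk in simp)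
  qed
qed

end



lemma conv_between:
  fixes T :: "real set"
  assumes "convex T" "x \<in> T" "y \<in> T" "x \<le> z" "z \<le> y"
  shows "z \<in> T"
proof -
  have "closed_segment x y \<subseteq> T" using assms(1-3) by (rule convex_contains_segment[THEN iffD1, rule_format])
  moreover have "z \<in> closed_segment x y" using assms(4,5) by (simp add: closed_segment_eq_real_ivl)
  ultimately show ?thesis by blast
qed

lemma seg_param:
  fixes v w :: "'a::euclidean_space"
  assumes "t1 \<le> t2"
  shows "(\<lambda>t. v + t *\<^sub>R (w - v)) ` {t1..t2} = closed_segment (v + t1 *\<^sub>R (w - v)) (v + t2 *\<^sub>R (w - v))"
proof -
  have lin: "linear (\<lambda>t::real. t *\<^sub>R (w - v))" by (rule linear_scaleR_left)
  have "closed_segment (t1 *\<^sub>R (w - v) + v) (t2 *\<^sub>R (w - v) + v) = (\<lambda>u. u *\<^sub>R (w - v) + v) ` closed_segment t1 t2"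
    by (rule seg_affine_image[OF lin])
  also have "closed_segment t1 t2 = {t1..t2}" using assms by (simp add: closed_segment_eq_real_ivl)
  finally show ?thesis by (simp add: add.commute)
qed

lemma seg_int_S:
  fixes v w :: "'a::euclidean_space"
  assumes P: "convex P" "v \<in> P" "w \<in> P"
    and t: "0 \<le> t1" "t1 \<le> t2" "t2 \<le> 1"
    and c: "\<And>t. 0 \<le> t \<Longrightarrow> t \<le> 1 \<Longrightarrow> (a \<bullet> v + t * (a \<bullet> w - a \<bullet> v) \<in> T \<longleftrightarrow> t1 \<le> t \<and> t \<le> t2)"
  shows "closed_segment v w \<inter> {u\<in>P. a \<bullet> u \<in> T} = closed_segment (v + t1 *\<^sub>R (w - v)) (v + t2 *\<^sub>R (w - v))"
proof -
  let ?h = "\<lambda>t. v + t *\<^sub>R (w - v)"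
  have seg: "closed_segment v w = ?h ` {0..1}" using seg_param[of 0 1 v w] by simp
  have inP: "?h t \<in> P" if "0 \<le> t" "t \<le> 1" for t
  proof -
    have "?h t \<in> closed_segment v w" using seg that by auto
    then show ?thesis using P convex_contains_segment by blast
  qed
  have av: "a \<bullet> ?h t = a \<bullet> v + t * (a \<bullet> w - a \<bullet> v)" for t
    by (simp add: inner_add_right inner_diff_right)
  have "closed_segment v w \<inter> {u\<in>P. a \<bullet> u \<in> T} = ?h ` {t1..t2}"
  proof
    show "closed_segment v w \<inter> {u\<in>P. a \<bullet> u \<in> T} \<subseteq> ?h ` {t1..t2}"
    proof
      fix u assume u: "u \<in> closed_segment v w \<inter> {u\<in>P. a \<bullet> u \<in> T}"
      then obtain t where tt: "0 \<le> t" "t \<le> 1" "u = ?h t" using seg by auto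
      then have "t1 \<le> t \<and> t \<le> t2" using c[OF tt(1,2)] u av by auto
      then show "u \<in> ?h ` {t1..t2}" using tt by auto
    qed
  next
    show "?h ` {t1..t2} \<subseteq> closed_segment v w \<inter> {u\<in>P. a \<bullet> u \<in> T}"
    proof
      fix u assume "u \<in> ?h ` {t1..t2}"
      then obtain t where tt: "t1 \<le> t" "t \<le> t2" "u = ?h t" by auto
      then have t01: "0 \<le> t" "t \<le> 1" using t by auto
      have "u \<in> closed_segment v w" using seg tt t01 by auto
      moreover have "a \<bullet> u \<in> T" using c[OF t01] tt av by auto
      ultimately show "u \<in> closed_segment v w \<inter> {u\<in>P. a \<bullet> u \<in> T}" using inP[OF t01] tt by auto
    qed
  qed
  also have "\<dots> = closed_segment (?h t1) (?h t2)" by (rule seg_param[OF t(2)])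
  finally show ?thesis .
qed

lemma face_seg_int:
  assumes "closed_segment v w face_of P" "S \<subseteq> P" "convex S"
  shows "closed_segment v w \<inter> S face_of S"
  using assms unfolding face_of_def by (auto intro: convex_Int; meson subsetD)

lemma seg_face_vertices:
  fixes p q :: "'a::euclidean_space"
  assumes "closed_segment p q face_of S"
  shows "vertex_of p S" "vertex_of q S" "p = q \<or> adjacent_in S p q"
proof -
  show vp: "vertex_of p S" unfolding vertex_of_def
    using extreme_point_of_face[OF assms] extreme_point_of_segment by blast
  show vq: "vertex_of q S" unfolding vertex_of_def
    using extreme_point_of_face[OF assms] extreme_point_of_segment by blast
  show "p = q \<or> adjacent_in S p q" using vp vq assms unfolding adjacent_in_alt by blast
qed

lemma walk_vertices:
  assumes "p 0 = v" "vertex_of v P" "\<forall>i<k. adjacent_in P (p i) (p (Suc i))" "i \<le> k"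
  shows "vertex_of (p i) P"
proof (cases i)
  case 0 then show ?thesis using assms by simp
next
  case (Suc j) then show ?thesis using assms(3,4) unfolding adjacent_in_def by auto
qed



lemma cond_up:
  fixes r0 r1 beta t :: real
  assumes "convex T" "r0 \<in> T" "beta \<in> T" "\<forall>s\<in>T. s \<le> beta" "r0 \<le> beta" "beta < r1" "0 \<le> t"
  shows "r0 + t * (r1 - r0) \<in> T \<longleftrightarrow> t \<le> (beta - r0) / (r1 - r0)"
proof -
  have pos: "0 < r1 - r0" using assms(5,6) by linarith
  have eq: "t \<le> (beta - r0) / (r1 - r0) \<longleftrightarrow> r0 + t * (r1 - r0) \<le> beta"
    using pos by (simp add: pos_le_divide_eq algebra_simps)
  have ge: "r0 \<le> r0 + t * (r1 - r0)" using mult_nonneg_nonneg[OF assms(7) less_imp_le[OF pos]] by simp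
  show ?thesis
  proof
    assume "r0 + t * (r1 - r0) \<in> T"
    then have "r0 + t * (r1 - r0) \<le> beta" using assms(4) by blast
    then show "t \<le> (beta - r0) / (r1 - r0)" using eq by blast
  next
    assume "t \<le> (beta - r0) / (r1 - r0)"
    then have "r0 + t * (r1 - r0) \<le> beta" using eq by blast
    then show "r0 + t * (r1 - r0) \<in> T" by (rule conv_between[OF assms(1,2,3) ge])
  qed
qed

lemma cond_down:
  fixes r0 r1 alpha t :: real
  assumes "convex T" "r0 \<in> T" "alpha \<in> T" "\<forall>s\<in>T. alpha \<le> s" "alpha \<le> r0" "r1 < alpha" "0 \<le> t"
  shows "r0 + t * (r1 - r0) \<in> T \<longleftrightarrow> t \<le> (r0 - alpha) / (r0 - r1)"
proof -
  have pos: "0 < r0 - r1" using assms(5,6) by linarith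
  have eq: "t \<le> (r0 - alpha) / (r0 - r1) \<longleftrightarrow> alpha \<le> r0 + t * (r1 - r0)"
    using pos by (simp add: pos_le_divide_eq algebra_simps)
  have "r1 - r0 \<le> 0" using pos by simp
  then have le: "r0 + t * (r1 - r0) \<le> r0" using mult_nonneg_nonpos[OF assms(7)] by fastforce
  show ?thesis
  proof
    assume "r0 + t * (r1 - r0) \<in> T"
    then have "alpha \<le> r0 + t * (r1 - r0)" using assms(4) by blast
    then show "t \<le> (r0 - alpha) / (r0 - r1)" using eq by blast
  next
    assume "t \<le> (r0 - alpha) / (r0 - r1)"
    then have "alpha \<le> r0 + t * (r1 - r0)" using eq by blast
    then show "r0 + t * (r1 - r0) \<in> T" by (rule conv_between[OF assms(1,3,2) _ le])
  qed
qed

lemma cond_both: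
  fixes r0 r1 alpha beta t :: real
  assumes "convex T" "alpha \<in> T" "beta \<in> T" "\<forall>s\<in>T. alpha \<le> s \<and> s \<le> beta" "beta < r0" "r1 < alpha"
  shows "r0 + t * (r1 - r0) \<in> T \<longleftrightarrow> (r0 - beta) / (r0 - r1) \<le> t \<and> t \<le> (r0 - alpha) / (r0 - r1)"
proof -
  have "alpha \<le> beta" using assms(2,4) by blast
  then have pos: "0 < r0 - r1" using assms(5,6) by linarith
  have eq1: "t \<le> (r0 - alpha) / (r0 - r1) \<longleftrightarrow> alpha \<le> r0 + t * (r1 - r0)"
    using pos by (simp add: pos_le_divide_eq algebra_simps)
  have eq2: "(r0 - beta) / (r0 - r1) \<le> t \<longleftrightarrow> r0 + t * (r1 - r0) \<le> beta"
    using pos by (simp add: pos_divide_le_eq algebra_simps)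
  show ?thesis
  proof
    assume "r0 + t * (r1 - r0) \<in> T"
    then have "alpha \<le> r0 + t * (r1 - r0)" "r0 + t * (r1 - r0) \<le> beta" using assms(4) by blast+
    then show "(r0 - beta) / (r0 - r1) \<le> t \<and> t \<le> (r0 - alpha) / (r0 - r1)" using eq1 eq2 by blast
  next
    assume "(r0 - beta) / (r0 - r1) \<le> t \<and> t \<le> (r0 - alpha) / (r0 - r1)"
    then have "alpha \<le> r0 + t * (r1 - r0)" "r0 + t * (r1 - r0) \<le> beta" using eq1 eq2 by blast+
    then show "r0 + t * (r1 - r0) \<in> T" by (rule conv_between[OF assms(1,2,3)])
  qed
qed

context
  fixes P :: "'a::euclidean_space set" and a :: 'a and T :: "real set" and S :: "'a set"
  assumes cP: "convex P" and cT: "convex T" and clT: "closed T"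
    and S_def: "S = {u\<in>P. a \<bullet> u \<in> T}"
begin

lemma convex_S: "convex S"
proof -
  have "S = P \<inter> (\<lambda>u. a \<bullet> u) -` T" unfolding S_def by auto
  moreover have "linear (\<lambda>u. a \<bullet> u)" using bounded_linear_inner_right bounded_linear.linear by blast
  ultimately show ?thesis using convex_Int[OF cP convex_linear_vimage[OF _ cT]] by simp
qed

lemma S_sub: "S \<subseteq> P" unfolding S_def by auto

lemma cross_gen:
  assumes adj: "adjacent_in P v w"
    and t: "0 \<le> t1" "t1 \<le> t2" "t2 \<le> 1"
    and c: "\<And>t. 0 \<le> t \<Longrightarrow> t \<le> 1 \<Longrightarrow> (a \<bullet> v + t * (a \<bullet> w - a \<bullet> v) \<in> T \<longleftrightarrow> t1 \<le> t \<and> t \<le> t2)"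
  shows "vertex_of (v + t1 *\<^sub>R (w - v)) S" "vertex_of (v + t2 *\<^sub>R (w - v)) S"
    "v + t1 *\<^sub>R (w - v) = v + t2 *\<^sub>R (w - v) \<or> adjacent_in S (v + t1 *\<^sub>R (w - v)) (v + t2 *\<^sub>R (w - v))"
proof -
  have f: "closed_segment v w face_of P" using adj unfolding adjacent_in_alt by blast
  have vw: "v \<in> P" "w \<in> P" using adj unfolding adjacent_in_def using vertex_in by blast+
  have eq: "closed_segment v w \<inter> S = closed_segment (v + t1 *\<^sub>R (w - v)) (v + t2 *\<^sub>R (w - v))"
    unfolding S_def by (rule seg_int_S[OF cP vw t c])
  have "closed_segment (v + t1 *\<^sub>R (w - v)) (v + t2 *\<^sub>R (w - v)) face_of S"
    using face_seg_int[OF f S_sub convex_S] eq by simp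
  then show "vertex_of (v + t1 *\<^sub>R (w - v)) S" "vertex_of (v + t2 *\<^sub>R (w - v)) S"
    "v + t1 *\<^sub>R (w - v) = v + t2 *\<^sub>R (w - v) \<or> adjacent_in S (v + t1 *\<^sub>R (w - v)) (v + t2 *\<^sub>R (w - v))"
    using seg_face_vertices by blast+
qed

lemma val_h: "a \<bullet> (v + t *\<^sub>R (w - v)) = a \<bullet> v + t * (a \<bullet> w - a \<bullet> v)"
  by (simp add: inner_add_right inner_diff_right)

lemma case_II:
  assumes adj: "adjacent_in P v w" and "a \<bullet> v \<in> T" "a \<bullet> w \<in> T"
  shows "edge_dist S v w \<le> 1"
proof -
  have c: "a \<bullet> v + t * (a \<bullet> w - a \<bullet> v) \<in> T \<longleftrightarrow> 0 \<le> t \<and> t \<le> 1" if "0 \<le> t" "t \<le> 1" for t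
  proof -
    have "a \<bullet> v + t * (a \<bullet> w - a \<bullet> v) = (1 - t) * (a \<bullet> v) + t * (a \<bullet> w)" by algebra
    moreover have "(1 - t) * (a \<bullet> v) + t * (a \<bullet> w) \<in> T"
      using cT assms(2,3) that unfolding convex_alt by simp
    ultimately have "a \<bullet> v + t * (a \<bullet> w - a \<bullet> v) \<in> T" by simp
    then show ?thesis using that by simp
  qed
  have g: "vertex_of (v + 0 *\<^sub>R (w - v)) S"
    "v + 0 *\<^sub>R (w - v) = v + 1 *\<^sub>R (w - v) \<or> adjacent_in S (v + 0 *\<^sub>R (w - v)) (v + 1 *\<^sub>R (w - v))"
    using cross_gen[OF adj _ _ _ c] by auto
  have "v + 0 *\<^sub>R (w - v) = v" "v + 1 *\<^sub>R (w - v) = w" by simp_all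
  then have "vertex_of v S" "v = w \<or> adjacent_in S v w" using g by simp_all
  then show ?thesis by (rule edge_dist_one)
qed

lemma case_IU:
  assumes adj: "adjacent_in P v w" and v: "a \<bullet> v \<in> T" and w: "\<forall>s\<in>T. s < a \<bullet> w"
  shows "\<exists>q. vertex_of q S \<and> bdd_above T \<and> a \<bullet> q = Sup T \<and> (v = q \<or> adjacent_in S v q)"
proof -
  define r0 where "r0 = a \<bullet> v"
  define r1 where "r1 = a \<bullet> w"
  have bdd: "bdd_above T" using w by (meson bdd_above.I less_imp_le)
  have ne: "T \<noteq> {}" using v by auto
  define beta where "beta = Sup T"
  have bT: "beta \<in> T" unfolding beta_def by (rule closed_contains_Sup[OF ne bdd clT])
  have bup: "\<forall>s\<in>T. s \<le> beta" unfolding beta_def using bdd cSup_upper by blast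
  have r0b: "r0 \<le> beta" using bup v r0_def by simp
  have br1: "beta < r1" using w bT r1_def by simp
  define ts where "ts = (beta - r0) / (r1 - r0)"
  have ts: "0 \<le> ts" "ts \<le> 1" using r0b br1 unfolding ts_def by (auto simp: divide_simps)
  have c: "a \<bullet> v + t * (a \<bullet> w - a \<bullet> v) \<in> T \<longleftrightarrow> 0 \<le> t \<and> t \<le> ts" if "0 \<le> t" "t \<le> 1" for t
    using cond_up[OF cT _ bT bup r0b br1 that(1)] v that unfolding ts_def r0_def r1_def by simp
  have g: "vertex_of (v + ts *\<^sub>R (w - v)) S"
    "v + 0 *\<^sub>R (w - v) = v + ts *\<^sub>R (w - v) \<or> adjacent_in S (v + 0 *\<^sub>R (w - v)) (v + ts *\<^sub>R (w - v))"
    using cross_gen[OF adj _ ts(1) ts(2) c] by auto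
  have nz: "r1 - r0 \<noteq> 0" using r0b br1 by linarith
  have "a \<bullet> (v + ts *\<^sub>R (w - v)) = r0 + ts * (r1 - r0)" unfolding val_h r0_def r1_def by simp
  also have "\<dots> = beta" unfolding ts_def using nz by (simp add: field_simps)
  finally have v1: "a \<bullet> (v + ts *\<^sub>R (w - v)) = beta" .
  have g2: "v = v + ts *\<^sub>R (w - v) \<or> adjacent_in S v (v + ts *\<^sub>R (w - v))" using g(2) by simp
  show ?thesis
    apply (rule exI[of _ "v + ts *\<^sub>R (w - v)"])
    using g(1) g2 bdd v1 unfolding beta_def by (intro conjI) assumption+
qed

lemma case_IL:
  assumes adj: "adjacent_in P v w" and v: "a \<bullet> v \<in> T" and w: "\<forall>s\<in>T. a \<bullet> w < s"
  shows "\<exists>q. vertex_of q S \<and> bdd_below T \<and> a \<bullet> q = Inf T \<and> (v = q \<or> adjacent_in S v q)"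
proof -
  define r0 where "r0 = a \<bullet> v"
  define r1 where "r1 = a \<bullet> w"
  have bdd: "bdd_below T" using w by (meson bdd_below.I less_imp_le)
  have ne: "T \<noteq> {}" using v by auto
  define alpha where "alpha = Inf T"
  have bT: "alpha \<in> T" unfolding alpha_def by (rule closed_contains_Inf[OF ne bdd clT])
  have bup: "\<forall>s\<in>T. alpha \<le> s" unfolding alpha_def using bdd cInf_lower by blast
  have r0b: "alpha \<le> r0" using bup v r0_def by simp
  have br1: "r1 < alpha" using w bT r1_def by simp
  define ts where "ts = (r0 - alpha) / (r0 - r1)"
  have ts: "0 \<le> ts" "ts \<le> 1" using r0b br1 unfolding ts_def by (auto simp: divide_simps)
  have c: "a \<bullet> v + t * (a \<bullet> w - a \<bullet> v) \<in> T \<longleftrightarrow> 0 \<le> t \<and> t \<le> ts" if "0 \<le> t" "t \<le> 1" for t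
    using cond_down[OF cT _ bT bup r0b br1 that(1)] v that unfolding ts_def r0_def r1_def by simp
  have g: "vertex_of (v + ts *\<^sub>R (w - v)) S"
    "v + 0 *\<^sub>R (w - v) = v + ts *\<^sub>R (w - v) \<or> adjacent_in S (v + 0 *\<^sub>R (w - v)) (v + ts *\<^sub>R (w - v))"
    using cross_gen[OF adj _ ts(1) ts(2) c] by auto
  have nz: "r0 - r1 \<noteq> 0" using r0b br1 by linarith
  have "a \<bullet> (v + ts *\<^sub>R (w - v)) = r0 + ts * (r1 - r0)" unfolding val_h r0_def r1_def by simp
  also have "\<dots> = alpha" unfolding ts_def using nz by (simp add: field_simps)
  finally have v1: "a \<bullet> (v + ts *\<^sub>R (w - v)) = alpha" .
  have g2: "v = v + ts *\<^sub>R (w - v) \<or> adjacent_in S v (v + ts *\<^sub>R (w - v))" using g(2) by simp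
  show ?thesis
    apply (rule exI[of _ "v + ts *\<^sub>R (w - v)"])
    using g(1) g2 bdd v1 unfolding alpha_def by (intro conjI) assumption+
qed

lemma case_UL:
  assumes adj: "adjacent_in P v w" and v: "\<forall>s\<in>T. s < a \<bullet> v" and w: "\<forall>s\<in>T. a \<bullet> w < s"
    and ne: "T \<noteq> {}"
  shows "\<exists>q1 q2. vertex_of q1 S \<and> bdd_above T \<and> a \<bullet> q1 = Sup T \<and>
                 vertex_of q2 S \<and> bdd_below T \<and> a \<bullet> q2 = Inf T \<and> (q1 = q2 \<or> adjacent_in S q1 q2)"
proof -
  define r0 where "r0 = a \<bullet> v"
  define r1 where "r1 = a \<bullet> w"
  have bdd: "bdd_above T" using v by (meson bdd_above.I less_imp_le)
  have bddb: "bdd_below T" using w by (meson bdd_below.I less_imp_le)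
  define alpha where "alpha = Inf T"
  define beta where "beta = Sup T"
  have aT: "alpha \<in> T" unfolding alpha_def by (rule closed_contains_Inf[OF ne bddb clT])
  have bT: "beta \<in> T" unfolding beta_def by (rule closed_contains_Sup[OF ne bdd clT])
  have bnd: "\<forall>s\<in>T. alpha \<le> s \<and> s \<le> beta" unfolding alpha_def beta_def
    using bdd bddb cInf_lower cSup_upper by blast
  have br0: "beta < r0" using v bT r0_def by simp
  have r1a: "r1 < alpha" using w aT r1_def by simp
  have ab: "alpha \<le> beta" using bnd aT by simp
  define t1 where "t1 = (r0 - beta) / (r0 - r1)"
  define t2 where "t2 = (r0 - alpha) / (r0 - r1)"
  have ts: "0 \<le> t1" "t1 \<le> t2" "t2 \<le> 1" using br0 r1a ab unfolding t1_def t2_def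
    by (auto simp: divide_simps)
  have c: "a \<bullet> v + t * (a \<bullet> w - a \<bullet> v) \<in> T \<longleftrightarrow> t1 \<le> t \<and> t \<le> t2" for t
    using cond_both[OF cT aT bT bnd br0 r1a] unfolding t1_def t2_def r0_def r1_def by simp
  have g: "vertex_of (v + t1 *\<^sub>R (w - v)) S" "vertex_of (v + t2 *\<^sub>R (w - v)) S"
    "v + t1 *\<^sub>R (w - v) = v + t2 *\<^sub>R (w - v) \<or> adjacent_in S (v + t1 *\<^sub>R (w - v)) (v + t2 *\<^sub>R (w - v))"
    using cross_gen[OF adj ts c] by auto
  have nz: "r0 - r1 \<noteq> 0" using br0 r1a ab by linarith
  have "a \<bullet> (v + t1 *\<^sub>R (w - v)) = r0 + t1 * (r1 - r0)" unfolding val_h r0_def r1_def by simp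
  also have "\<dots> = beta" unfolding t1_def using nz by (simp add: field_simps)
  finally have v1: "a \<bullet> (v + t1 *\<^sub>R (w - v)) = beta" .
  have "a \<bullet> (v + t2 *\<^sub>R (w - v)) = r0 + t2 * (r1 - r0)" unfolding val_h r0_def r1_def by simp
  also have "\<dots> = alpha" unfolding t2_def using nz by (simp add: field_simps)
  finally have v2: "a \<bullet> (v + t2 *\<^sub>R (w - v)) = alpha" .
  show ?thesis
    apply (rule exI[of _ "v + t1 *\<^sub>R (w - v)"])
    apply (rule exI[of _ "v + t2 *\<^sub>R (w - v)"])
    using g bdd bddb v1 v2 unfolding alpha_def beta_def by (intro conjI) assumption+
qed

end



context
  fixes P :: "'a::euclidean_space set" and a :: 'a and T :: "real set" and S :: "'a set"
  assumes cP: "convex P" and cT: "convex T" and clT: "closed T"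
    and S_def: "S = {u\<in>P. a \<bullet> u \<in> T}"
begin

lemma slab_dist:
  assumes walk: "edge_walk P k x x'" and x: "x \<in> S" and x': "x' \<in> S"
    and slices: "\<And>g q q'. g \<in> T \<Longrightarrow> vertex_of q (P \<inter> {u. a \<bullet> u = g}) \<Longrightarrow>
        vertex_of q' (P \<inter> {u. a \<bullet> u = g}) \<Longrightarrow> edge_dist (P \<inter> {u. a \<bullet> u = g}) q q' \<le> enat D"
  shows "edge_dist S x x' \<le> enat (k + 2 * D)"
proof -
  obtain p where p: "p 0 = x" "p k = x'" "vertex_of x P" "\<forall>i<k. adjacent_in P (p i) (p (Suc i))"
    using walk unfolding edge_walk_def by blast
  have vp: "\<And>i. i \<le> k \<Longrightarrow> vertex_of (p i) P" using walk_vertices[OF p(1,3,4)] by blast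
  have adj: "\<And>i. i < k \<Longrightarrow> adjacent_in P (p i) (p (Suc i))" using p(4) by blast
  have adj': "\<And>i. i < k \<Longrightarrow> adjacent_in P (p (Suc i)) (p i)" using adj adjacent_sym by blast
  have Tne: "T \<noteq> {}" using x S_def by auto
  define I where "I = (\<lambda>i. a \<bullet> p i \<in> T)"
  define U where "U = (\<lambda>i. \<forall>s\<in>T. s < a \<bullet> p i)"
  define L where "L = (\<lambda>i. \<forall>s\<in>T. a \<bullet> p i < s)"
  define VU where "VU = {q. vertex_of q S \<and> bdd_above T \<and> a \<bullet> q = Sup T}"
  define VL where "VL = {q. vertex_of q S \<and> bdd_below T \<and> a \<bullet> q = Inf T}"
  have vS: "\<And>i. i \<le> k \<Longrightarrow> I i \<Longrightarrow> vertex_of (p i) S"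
  proof -
    fix i assume "i \<le> k" "I i"
    then show "vertex_of (p i) S"
      using vp[of i] vertex_in[of "p i" P] vertex_subset[of "p i" P S] S_def I_def by auto
  qed
  have cS: "convex S" by (rule convex_S[OF cP cT clT S_def])
  have "edge_dist S (p 0) (p k) \<le> enat (k + 2 * D)"
  proof (rule comb_slab[where d="edge_dist S" and I=I and U=U and L=L and VU=VU and VL=VL and p=p])
    show "edge_dist S a' c' \<le> edge_dist S a' b' + edge_dist S b' c'" for a' b' c' by (rule edge_dist_tri)
    show "edge_dist S (p i) (p i) = 0" if h: "i \<le> k" "I i" for i using vS[OF h] by (rule edge_dist_refl)
    show "I i \<or> U i \<or> L i" if h: "i \<le> k" for i
    proof (rule ccontr)
      assume "\<not> (I i \<or> U i \<or> L i)"
      then obtain s1 s2 where "s1 \<in> T" "s2 \<in> T" "s1 \<le> a \<bullet> p i" "a \<bullet> p i \<le> s2" "a \<bullet> p i \<notin> T"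
        unfolding I_def U_def L_def by (auto simp: not_less)
      then show False using conv_between[OF cT] by blast
    qed
    show "\<not> U i" if h: "I i" for i using h unfolding I_def U_def by blast
    show "\<not> L i" if h: "I i" for i using h unfolding I_def L_def by blast
    show "\<not> L i" if h: "U i" for i using h Tne unfolding U_def L_def by force
    show "edge_dist S (p i) (p (Suc i)) \<le> 1" if h: "i < k" "I i" "I (Suc i)" for i
      using case_II[OF cP cT clT S_def adj[OF h(1)]] h(2,3) unfolding I_def by blast
    show "\<exists>q\<in>VU. edge_dist S (p i) q \<le> 1" if h: "i < k" "I i" "U (Suc i)" for i
    proof -
      obtain q where q: "vertex_of q S" "bdd_above T" "a \<bullet> q = Sup T" "p i = q \<or> adjacent_in S (p i) q"
        using case_IU[OF cP cT clT S_def adj[OF h(1)]] h(2,3) unfolding I_def U_def by blast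
      have "edge_dist S (p i) q \<le> 1" using vS[of i] h q(4) by (intro edge_dist_one) auto
      then show ?thesis using q unfolding VU_def by blast
    qed
    show "\<exists>q\<in>VU. edge_dist S q (p (Suc i)) \<le> 1" if h: "i < k" "U i" "I (Suc i)" for i
    proof -
      obtain q where q: "vertex_of q S" "bdd_above T" "a \<bullet> q = Sup T" "p (Suc i) = q \<or> adjacent_in S (p (Suc i)) q"
        using case_IU[OF cP cT clT S_def adj'[OF h(1)]] h(2,3) unfolding I_def U_def by blast
      have "edge_dist S q (p (Suc i)) \<le> 1" using q(1,4) adjacent_sym by (intro edge_dist_one) auto
      then show ?thesis using q unfolding VU_def by blast
    qed
    show "\<exists>q\<in>VL. edge_dist S (p i) q \<le> 1" if h: "i < k" "I i" "L (Suc i)" for i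
    proof -
      obtain q where q: "vertex_of q S" "bdd_below T" "a \<bullet> q = Inf T" "p i = q \<or> adjacent_in S (p i) q"
        using case_IL[OF cP cT clT S_def adj[OF h(1)]] h(2,3) unfolding I_def L_def by blast
      have "edge_dist S (p i) q \<le> 1" using vS[of i] h q(4) by (intro edge_dist_one) auto
      then show ?thesis using q unfolding VL_def by blast
    qed
    show "\<exists>q\<in>VL. edge_dist S q (p (Suc i)) \<le> 1" if h: "i < k" "L i" "I (Suc i)" for i
    proof -
      obtain q where q: "vertex_of q S" "bdd_below T" "a \<bullet> q = Inf T" "p (Suc i) = q \<or> adjacent_in S (p (Suc i)) q"
        using case_IL[OF cP cT clT S_def adj'[OF h(1)]] h(2,3) unfolding I_def L_def by blast
      have "edge_dist S q (p (Suc i)) \<le> 1" using q(1,4) adjacent_sym by (intro edge_dist_one) auto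
      then show ?thesis using q unfolding VL_def by blast
    qed
    show "\<exists>q1\<in>VU. \<exists>q2\<in>VL. edge_dist S q1 q2 \<le> 1" if h: "i < k" "U i" "L (Suc i)" for i
    proof -
      obtain q1 q2 where q: "vertex_of q1 S" "bdd_above T" "a \<bullet> q1 = Sup T"
          "vertex_of q2 S" "bdd_below T" "a \<bullet> q2 = Inf T" "q1 = q2 \<or> adjacent_in S q1 q2"
        using case_UL[OF cP cT clT S_def adj[OF h(1)] _ _ Tne] h(2,3) unfolding U_def L_def by blast
      have "edge_dist S q1 q2 \<le> 1" using q(1,7) by (rule edge_dist_one)
      then show ?thesis using q unfolding VU_def VL_def by blast
    qed
    show "\<exists>q1\<in>VL. \<exists>q2\<in>VU. edge_dist S q1 q2 \<le> 1" if h: "i < k" "L i" "U (Suc i)" for i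
    proof -
      obtain q1 q2 where q: "vertex_of q1 S" "bdd_above T" "a \<bullet> q1 = Sup T"
          "vertex_of q2 S" "bdd_below T" "a \<bullet> q2 = Inf T" "q1 = q2 \<or> adjacent_in S q1 q2"
        using case_UL[OF cP cT clT S_def adj'[OF h(1)] _ _ Tne] h(2,3) unfolding U_def L_def by blast
      have "q2 = q1 \<or> adjacent_in S q2 q1" using q(7) adjacent_sym by blast
      then have "edge_dist S q2 q1 \<le> 1" using q(4) by (intro edge_dist_one)
      then show ?thesis using q unfolding VU_def VL_def by blast
    qed
    show "edge_dist S q q' \<le> enat D" if h: "q \<in> VU" "q' \<in> VU" for q q'
    proof -
      have bdd: "bdd_above T" using h unfolding VU_def by auto
      have sT: "Sup T \<in> T" by (rule closed_contains_Sup[OF Tne bdd clT])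
      have le: "\<And>u. u \<in> S \<Longrightarrow> a \<bullet> u \<le> Sup T" using S_def bdd cSup_upper by blast
      have F: "S \<inter> {u. a \<bullet> u = Sup T} face_of S" by (rule face_of_Int_supporting_hyperplane_le[OF cS le])
      have Zeq: "S \<inter> {u. a \<bullet> u = Sup T} = P \<inter> {u. a \<bullet> u = Sup T}" using S_def sT by auto
      have vq: "vertex_of q (P \<inter> {u. a \<bullet> u = Sup T})" "vertex_of q' (P \<inter> {u. a \<bullet> u = Sup T})"
        using h vertex_face_iff[OF F] vertex_in unfolding VU_def Zeq[symmetric] by auto
      have "edge_dist S q q' \<le> edge_dist (S \<inter> {u. a \<bullet> u = Sup T}) q q'" by (rule dist_face[OF F])
      also have "\<dots> \<le> enat D" unfolding Zeq by (rule slices[OF sT vq])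
      finally show ?thesis .
    qed
    show "edge_dist S q q' \<le> enat D" if h: "q \<in> VL" "q' \<in> VL" for q q'
    proof -
      have bdd: "bdd_below T" using h unfolding VL_def by auto
      have sT: "Inf T \<in> T" by (rule closed_contains_Inf[OF Tne bdd clT])
      have le: "\<And>u. u \<in> S \<Longrightarrow> a \<bullet> u \<ge> Inf T" using S_def bdd cInf_lower by blast
      have F: "S \<inter> {u. a \<bullet> u = Inf T} face_of S" by (rule face_of_Int_supporting_hyperplane_ge[OF cS le])
      have Zeq: "S \<inter> {u. a \<bullet> u = Inf T} = P \<inter> {u. a \<bullet> u = Inf T}" using S_def sT by auto
      have vq: "vertex_of q (P \<inter> {u. a \<bullet> u = Inf T})" "vertex_of q' (P \<inter> {u. a \<bullet> u = Inf T})"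
        using h vertex_face_iff[OF F] vertex_in unfolding VL_def Zeq[symmetric] by auto
      have "edge_dist S q q' \<le> edge_dist (S \<inter> {u. a \<bullet> u = Inf T}) q q'" by (rule dist_face[OF F])
      also have "\<dots> \<le> enat D" unfolding Zeq by (rule slices[OF sT vq])
      finally show ?thesis .
    qed
    show "I 0" using x p(1) S_def unfolding I_def by auto
    show "I k" using x' p(2) S_def unfolding I_def by auto
  qed
  then show ?thesis using p(1,2) by simp
qed

end



lemma supp_add: "supp (u + v) \<subseteq> supp u \<union> supp v" unfolding supp_def by auto
lemma supp_diff: "supp (u - v) \<subseteq> supp u \<union> supp v" unfolding supp_def by auto
lemma supp_scale: "supp (c *\<^sub>R u) \<subseteq> supp u" unfolding supp_def by auto

lemma nonneg_eps:
  fixes v e :: "real ^ 'n"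
  assumes "nonneg v" "supp e \<subseteq> supp v"
  shows "\<exists>eps>0. nonneg (v + eps *\<^sub>R e) \<and> nonneg (v - eps *\<^sub>R e)"
proof -
  define F where "F = insert 1 ((\<lambda>i. v $ i / (\<bar>e $ i\<bar> + 1)) ` supp v)"
  define eps where "eps = Min F"
  have fin: "finite F" unfolding F_def by simp
  have pos: "\<forall>f\<in>F. 0 < f"
  proof
    fix f assume "f \<in> F"
    then consider "f = 1" | i where "i \<in> supp v" "f = v $ i / (\<bar>e $ i\<bar> + 1)" unfolding F_def by auto
    then show "0 < f"
    proof cases
      case 2
      then have "0 < v $ i" using assms(1) unfolding nonneg_def supp_def
        by (metis less_eq_real_def mem_Collect_eq)
      then show ?thesis using 2 by (simp add: add_pos_nonneg)
    qed simp
  qed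
  have e0: "0 < eps" unfolding eps_def using fin pos by (simp add: F_def)
  have bnd: "eps * \<bar>e $ i\<bar> \<le> v $ i" for i
  proof (cases "i \<in> supp v")
    case True
    have vi: "0 \<le> v $ i" using assms(1) unfolding nonneg_def by simp
    have "eps \<le> v $ i / (\<bar>e $ i\<bar> + 1)" unfolding eps_def using fin True by (auto simp: F_def)
    then have "eps * (\<bar>e $ i\<bar> + 1) \<le> v $ i" by (simp add: pos_le_divide_eq add_pos_nonneg)
    moreover have "eps * \<bar>e $ i\<bar> \<le> eps * (\<bar>e $ i\<bar> + 1)" using e0 by simp
    ultimately show ?thesis by linarith
  next
    case False
    then have "e $ i = 0" using assms(2) unfolding supp_def by auto
    then show ?thesis using assms(1) unfolding nonneg_def by simp
  qed
  have "nonneg (v + eps *\<^sub>R e) \<and> nonneg (v - eps *\<^sub>R e)"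
    unfolding nonneg_def
  proof (intro conjI allI)
    fix i
    have "\<bar>eps * e $ i\<bar> \<le> v $ i" using bnd[of i] e0 by (simp add: abs_mult)
    then show "0 \<le> (v + eps *\<^sub>R e) $ i" "0 \<le> (v - eps *\<^sub>R e) $ i" by (simp_all add: abs_le_iff)
  qed
  then show ?thesis using e0 by blast
qed

lemma extreme_dir:
  fixes v e :: "'a::euclidean_space"
  assumes "v extreme_point_of X" "0 < eps" "v + eps *\<^sub>R e \<in> X" "v - eps *\<^sub>R e \<in> X"
  shows "e = 0"
proof (rule ccontr)
  assume "e \<noteq> 0"
  then have nz: "(2 * eps) *\<^sub>R e \<noteq> 0" using assms(2) by simp
  have df: "(v + eps *\<^sub>R e) - (v - eps *\<^sub>R e) = (2 * eps) *\<^sub>R e" by (simp add: scaleR_2 flip: scaleR_scaleR)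
  have ne: "v - eps *\<^sub>R e \<noteq> v + eps *\<^sub>R e"
  proof
    assume "v - eps *\<^sub>R e = v + eps *\<^sub>R e"
    then have "(v + eps *\<^sub>R e) - (v - eps *\<^sub>R e) = 0" by simp
    then show False using df nz by simp
  qed
  have "midpoint (v - eps *\<^sub>R e) (v + eps *\<^sub>R e) = v" by (simp add: midpoint_def algebra_simps flip: scaleR_add_left)
  then have "v \<in> open_segment (v - eps *\<^sub>R e) (v + eps *\<^sub>R e)" using ne midpoint_in_open_segment by metis
  then show False using assms unfolding extreme_point_of_def by blast
qed

lemma stack_row_mult: "(stack_row M c *v z) $ i = (case i of None \<Rightarrow> c \<bullet> z | Some j \<Rightarrow> (M *v z) $ j)"
  by (cases i) (simp_all add: stack_row_def matrix_vector_mult_def inner_vec_def mult.commute)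

definition rhs :: "real \<Rightarrow> real ^ 'm \<Rightarrow> real ^ ('m option)" where
  "rhs g r = (\<chi> i. case i of None \<Rightarrow> g | Some j \<Rightarrow> r $ j)"

lemma std_poly_stack: "std_poly (stack_row M c) (rhs g r) = {z. M *v z = r \<and> c \<bullet> z = g \<and> nonneg z}"
proof -
  have "stack_row M c *v z = rhs g r \<longleftrightarrow> M *v z = r \<and> c \<bullet> z = g" for z
  proof
    assume h: "stack_row M c *v z = rhs g r"
    have "(stack_row M c *v z) $ None = rhs g r $ None" using h by simp
    then have "c \<bullet> z = g" by (simp add: stack_row_mult rhs_def)
    moreover have "(M *v z) $ j = r $ j" for j
    proof -
      have "(stack_row M c *v z) $ Some j = rhs g r $ Some j" using h by simp
      then show ?thesis by (simp add: stack_row_mult rhs_def)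
    qed
    ultimately show "M *v z = r \<and> c \<bullet> z = g" by (simp add: vec_eq_iff)
  next
    assume "M *v z = r \<and> c \<bullet> z = g"
    then show "stack_row M c *v z = rhs g r"
      by (simp add: vec_eq_iff stack_row_mult rhs_def split: option.split)
  qed
  then show ?thesis unfolding std_poly_def by auto
qed

lemma dist_le_comb_diam: "vertex_of v P \<Longrightarrow> vertex_of w P \<Longrightarrow> edge_dist P v w \<le> comb_diam P"
  unfolding comb_diam_def
  by (rule SUP_upper2[of v], simp, rule SUP_upper2[of w]) auto

lemma comb_le_mat: "comb_diam (std_poly M r) \<le> mat_diam M"
  unfolding mat_diam_def by (rule SUP_upper) simp



lemma R_mem: "(u, w) \<in> Rpoly A a b B cA cB ca cb \<longleftrightarrow>
   A *v u = cA \<and> a \<bullet> u + b \<bullet> w = ca + cb \<and> B *v w = cB \<and> nonneg u \<and> nonneg w"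
  unfolding Rpoly_def by simp

lemma nonneg_comb: "nonneg u \<Longrightarrow> nonneg v \<Longrightarrow> 0 \<le> s \<Longrightarrow> 0 \<le> t \<Longrightarrow> nonneg (s *\<^sub>R u + t *\<^sub>R v)"
  unfolding nonneg_def by simp

lemma convex_R: "convex (Rpoly A a b B cA cB ca cb)"
  unfolding convex_def
proof (intro ballI allI impI)
  fix z1 z2 and s t :: real
  assume z: "z1 \<in> Rpoly A a b B cA cB ca cb" "z2 \<in> Rpoly A a b B cA cB ca cb" and st: "0 \<le> s" "0 \<le> t" "s + t = 1"
  obtain u1 w1 u2 w2 where e: "z1 = (u1, w1)" "z2 = (u2, w2)" by (cases z1, cases z2) auto
  have h: "A *v u1 = cA" "a \<bullet> u1 + b \<bullet> w1 = ca + cb" "B *v w1 = cB" "nonneg u1" "nonneg w1"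
          "A *v u2 = cA" "a \<bullet> u2 + b \<bullet> w2 = ca + cb" "B *v w2 = cB" "nonneg u2" "nonneg w2"
    using z unfolding e by (simp_all add: R_mem)
  have "A *v (s *\<^sub>R u1 + t *\<^sub>R u2) = (s + t) *\<^sub>R cA"
    using h by (simp add: matrix_vector_right_distrib matrix_vector_mult_scaleR scaleR_add_left)
  moreover have "B *v (s *\<^sub>R w1 + t *\<^sub>R w2) = (s + t) *\<^sub>R cB"
    using h by (simp add: matrix_vector_right_distrib matrix_vector_mult_scaleR scaleR_add_left)
  moreover have "a \<bullet> (s *\<^sub>R u1 + t *\<^sub>R u2) + b \<bullet> (s *\<^sub>R w1 + t *\<^sub>R w2)
      = s * (a \<bullet> u1 + b \<bullet> w1) + t * (a \<bullet> u2 + b \<bullet> w2)"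
    by (simp add: inner_add_right algebra_simps)
  ultimately show "s *\<^sub>R z1 + t *\<^sub>R z2 \<in> Rpoly A a b B cA cB ca cb"
    using h st e nonneg_comb[of u1 u2 s t] nonneg_comb[of w1 w2 s t] by (simp add: R_mem algebra_simps flip: distrib_left)
qed

lemma convex_std: "convex (std_poly M r)"
  unfolding convex_def std_poly_def
proof (intro ballI allI impI, simp only: mem_Collect_eq)
  fix z1 z2 and s t :: real
  assume z: "M *v z1 = r \<and> nonneg z1" "M *v z2 = r \<and> nonneg z2" and st: "0 \<le> s" "0 \<le> t" "s + t = 1"
  have "M *v (s *\<^sub>R z1 + t *\<^sub>R z2) = (s + t) *\<^sub>R r"
    using z by (simp add: matrix_vector_right_distrib matrix_vector_mult_scaleR scaleR_add_left)
  then show "M *v (s *\<^sub>R z1 + t *\<^sub>R z2) = r \<and> nonneg (s *\<^sub>R z1 + t *\<^sub>R z2)"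
    using st z nonneg_comb[of z1 z2 s t] by simp
qed

lemma vertex_R_dir:
  assumes v: "vertex_of (x, y) (Rpoly A a b B cA cB ca cb)"
    and e: "B *v e = 0" "supp e \<subseteq> supp y" "b \<bullet> e = 0"
  shows "e = 0"
proof -
  have m: "(x, y) \<in> Rpoly A a b B cA cB ca cb" using v vertex_in by blast
  then have h: "A *v x = cA" "a \<bullet> x + b \<bullet> y = ca + cb" "B *v y = cB" "nonneg x" "nonneg y"
    by (simp_all add: R_mem)
  obtain eps where eps: "0 < eps" "nonneg (y + eps *\<^sub>R e)" "nonneg (y - eps *\<^sub>R e)"
    using nonneg_eps[OF h(5) e(2)] by blast
  have "(x, y) + eps *\<^sub>R (0, e) \<in> Rpoly A a b B cA cB ca cb"
    using h eps e by (simp add: R_mem matrix_vector_right_distrib matrix_vector_mult_scaleR inner_add_right)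
  moreover have "(x, y) - eps *\<^sub>R (0, e) \<in> Rpoly A a b B cA cB ca cb"
    using h eps e by (simp add: R_mem matrix_vector_mult_diff_distrib matrix_vector_mult_scaleR inner_diff_right)
  ultimately have "(0, e) = (0::real^'a, 0::real^'b)"
    using extreme_dir[of "(x, y)" "Rpoly A a b B cA cB ca cb" eps "(0, e)"] v eps(1)
    unfolding vertex_of_def by (simp add: zero_prod_def)
  then show ?thesis by simp
qed

lemma vertex_std_unique:
  assumes v: "vertex_of x (std_poly M r)" and u: "u \<in> std_poly M r" and s: "supp u \<subseteq> supp x"
  shows "u = x"
proof -
  have hx: "M *v x = r" "nonneg x" using v vertex_in unfolding std_poly_def by blast+
  have hu: "M *v u = r" "nonneg u" using u unfolding std_poly_def by blast+
  have se: "supp (u - x) \<subseteq> supp x" using s supp_diff by blast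
  obtain eps where eps: "0 < eps" "nonneg (x + eps *\<^sub>R (u - x))" "nonneg (x - eps *\<^sub>R (u - x))"
    using nonneg_eps[OF hx(2) se] by blast
  have "x + eps *\<^sub>R (u - x) \<in> std_poly M r" "x - eps *\<^sub>R (u - x) \<in> std_poly M r"
    using hx hu eps unfolding std_poly_def
    by (simp_all add: matrix_vector_right_distrib matrix_vector_mult_diff_distrib matrix_vector_mult_scaleR)
  then have "u - x = 0" using extreme_dir[of x "std_poly M r" eps "u - x"] v eps(1) unfolding vertex_of_def by blast
  then show ?thesis by simp
qed

lemma N_struct:
  assumes v: "vertex_of (x, y) (Rpoly A a b B cA cB ca cb)"
  shows "\<exists>d. B *v d = 0 \<and> supp d \<subseteq> supp y \<and> (d = 0 \<or> b \<bullet> d = 1) \<and>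
             (\<forall>e. B *v e = 0 \<and> supp e \<subseteq> supp y \<longrightarrow> e = (b \<bullet> e) *\<^sub>R d)"
proof (cases "\<exists>e0. B *v e0 = 0 \<and> supp e0 \<subseteq> supp y \<and> e0 \<noteq> 0")
  case False
  then show ?thesis by (intro exI[of _ 0]) (auto simp: supp_def)
next
  case True
  then obtain e0 where e0: "B *v e0 = 0" "supp e0 \<subseteq> supp y" "e0 \<noteq> 0" by blast
  have be0: "b \<bullet> e0 \<noteq> 0" using vertex_R_dir[OF v e0(1,2)] e0(3) by blast
  define d where "d = (1 / (b \<bullet> e0)) *\<^sub>R e0"
  have d: "B *v d = 0" "supp d \<subseteq> supp y" "b \<bullet> d = 1"
    using e0 be0 supp_scale[of _ e0] unfolding d_def by (auto simp: matrix_vector_mult_scaleR)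
  have "e = (b \<bullet> e) *\<^sub>R d" if "B *v e = 0" "supp e \<subseteq> supp y" for e
  proof -
    have "B *v (e - (b \<bullet> e) *\<^sub>R d) = 0" using that d by (simp add: matrix_vector_mult_diff_distrib matrix_vector_mult_scaleR)
    moreover have "supp (e - (b \<bullet> e) *\<^sub>R d) \<subseteq> supp y"
      using that d supp_diff[of e "(b \<bullet> e) *\<^sub>R d"] supp_scale[of "b \<bullet> e" d] by blast
    moreover have "b \<bullet> (e - (b \<bullet> e) *\<^sub>R d) = 0" using d by (simp add: inner_diff_right)
    ultimately have "e - (b \<bullet> e) *\<^sub>R d = 0" by (rule vertex_R_dir[OF v])
    then show ?thesis by simp
  qed
  then show ?thesis using d by blast
qed

lemma ind_inner_zero:
  fixes w :: "real ^ 'n"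
  assumes "nonneg w"
  shows "0 \<le> (\<chi> i. if i \<in> Y then 0 else 1) \<bullet> w"
    "(\<chi> i. if i \<in> Y then 0 else 1) \<bullet> w = 0 \<longleftrightarrow> supp w \<subseteq> Y"
proof -
  have nn: "\<forall>i\<in>UNIV. 0 \<le> (if i \<in> Y then 0 else 1) * w $ i" using assms unfolding nonneg_def by simp
  have eq: "(\<chi> i. if i \<in> Y then 0 else 1) \<bullet> w = (\<Sum>i\<in>UNIV. (if i \<in> Y then 0 else 1) * w $ i)"
    by (simp add: inner_vec_def)
  show "0 \<le> (\<chi> i. if i \<in> Y then 0 else (1::real)) \<bullet> w" unfolding eq using nn by (simp add: sum_nonneg)
  show "(\<chi> i. if i \<in> Y then 0 else (1::real)) \<bullet> w = 0 \<longleftrightarrow> supp w \<subseteq> Y"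
  proof -
    have "(\<Sum>i\<in>UNIV. (if i \<in> Y then 0 else 1) * w $ i) = 0 \<longleftrightarrow> (\<forall>i\<in>UNIV. (if i \<in> Y then 0 else 1) * w $ i = 0)"
      by (rule sum_nonneg_eq_0_iff) (use nn in auto)
    then show ?thesis unfolding eq by (auto simp: supp_def)
  qed
qed

lemma face_supp_snd:
  "{z \<in> Rpoly A a b B cA cB ca cb. supp (snd z) \<subseteq> Y} face_of Rpoly A a b B cA cB ca cb"
proof -
  let ?f = "(0::real^'a, (\<chi> i. if i \<in> Y then 0 else 1) :: real^'b)"
  have ge: "\<And>z. z \<in> Rpoly A a b B cA cB ca cb \<Longrightarrow> ?f \<bullet> z \<ge> 0"
    using ind_inner_zero(1) by (auto simp: Rpoly_def)
  have "{z \<in> Rpoly A a b B cA cB ca cb. supp (snd z) \<subseteq> Y} = Rpoly A a b B cA cB ca cb \<inter> {z. ?f \<bullet> z = 0}"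
    by (auto simp: Rpoly_def ind_inner_zero(2))
  then show ?thesis using face_of_Int_supporting_hyperplane_ge[OF convex_R ge] by simp
qed

lemma face_supp_fst:
  "{z \<in> Rpoly A a b B cA cB ca cb. supp (fst z) \<subseteq> X} face_of Rpoly A a b B cA cB ca cb"
proof -
  let ?f = "((\<chi> i. if i \<in> X then 0 else 1) :: real^'a, 0::real^'b)"
  have ge: "\<And>z. z \<in> Rpoly A a b B cA cB ca cb \<Longrightarrow> ?f \<bullet> z \<ge> 0"
    using ind_inner_zero(1) by (auto simp: Rpoly_def)
  have "{z \<in> Rpoly A a b B cA cB ca cb. supp (fst z) \<subseteq> X} = Rpoly A a b B cA cB ca cb \<inter> {z. ?f \<bullet> z = 0}"
    by (auto simp: Rpoly_def ind_inner_zero(2))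
  then show ?thesis using face_of_Int_supporting_hyperplane_ge[OF convex_R ge] by simp
qed



theorem lemma5:
  fixes A :: "real ^ 'n1 ^ 'm1" and a :: "real ^ 'n1"
    and b :: "real ^ 'n2" and B :: "real ^ 'n2 ^ 'm2"
    and cA :: "real ^ 'm1" and cB :: "real ^ 'm2" and ca cb :: real
    and x x' :: "real ^ 'n1" and y y' :: "real ^ 'n2"
  assumes "a \<noteq> 0" and "b \<noteq> 0"
    and "simple_polyhedron (Rpoly A a b B cA cB ca cb)"
    and "x_vertex (Rpoly A a b B cA cB ca cb) A cA (x, y)"
    and "x_vertex (Rpoly A a b B cA cB ca cb) A cA (x', y')"
    and "a \<bullet> x' \<in> Band_x b B cB ca cb y"
  shows "edge_dist (Rpoly A a b B cA cB ca cb) (x, y) (x', y')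
         \<le> comb_diam (std_poly A cA) + 2 * mat_diam (stack_row A a)
           + mat_diam (stack_row B b) + 2"
proof -
  define R where "R = Rpoly A a b B cA cB ca cb"
  define PA where "PA = std_poly A cA"
  define c where "c = ca + cb"
  have vxy: "vertex_of (x, y) R" "vertex_of x PA" using assms(4) unfolding x_vertex_def R_def PA_def by auto
  have vxy': "vertex_of (x', y') R" "vertex_of x' PA" using assms(5) unfolding x_vertex_def R_def PA_def by auto
  obtain z where z: "a \<bullet> x' = c - b \<bullet> z" "B *v z = cB" "supp z \<subseteq> supp y" "nonneg z"
    using assms(6) unfolding Band_x_def c_def by blast
  show ?thesis
  proof (cases "comb_diam PA = \<infinity> \<or> mat_diam (stack_row A a) = \<infinity> \<or> mat_diam (stack_row B b) = \<infinity>")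
    case True
    have two: "(2::enat) * \<infinity> = \<infinity>" by (simp add: numeral_eq_enat)
    show ?thesis using True two unfolding PA_def by auto
  next
    case False
    then obtain kA DA DB where fin: "comb_diam PA = enat kA" "mat_diam (stack_row A a) = enat DA"
        "mat_diam (stack_row B b) = enat DB"
      by (metis enat.exhaust)
    have main: "edge_dist R (x, y) (x', y') \<le> enat (kA + 2 * DA + DB)"
      proof -
      obtain d where d: "B *v d = 0" "supp d \<subseteq> supp y" "d = 0 \<or> b \<bullet> d = 1"
          "\<And>e. B *v e = 0 \<Longrightarrow> supp e \<subseteq> supp y \<Longrightarrow> e = (b \<bullet> e) *\<^sub>R d"
        using N_struct[OF vxy(1)[unfolded R_def]] by blast
      define g where "g = c - b \<bullet> y"
      define T where "T = (if d = 0 then {g} else {t. nonneg (y + (g - t) *\<^sub>R d)})"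
      define S where "S = {u \<in> PA. a \<bullet> u \<in> T}"
      define L1 where "L1 = (\<lambda>u::real^'n1. (u, - (a \<bullet> u) *\<^sub>R d))"
      define c1 where "c1 = ((0::real^'n1), y + g *\<^sub>R d)"
      define H where "H = {q \<in> R. supp (snd q) \<subseteq> supp y}"
      have phi: "L1 u + c1 = (u, y + (g - a \<bullet> u) *\<^sub>R d)" for u
        unfolding L1_def c1_def by (simp add: algebra_simps)
      have linL1: "linear L1" unfolding L1_def linear_iff
        by (simp add: inner_add_right algebra_simps scaleR_add_left)
      have injL1: "inj L1" unfolding L1_def inj_def by simp
      have cPA: "convex PA" unfolding PA_def by (rule convex_std)
      have cT: "convex T"
      proof (cases "d = 0")
        case True then show ?thesis unfolding T_def by simp
      next
        case False
        show ?thesis unfolding T_def convex_def using False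
        proof (simp only: if_False, intro ballI allI impI, simp only: mem_Collect_eq)
          fix t1 t2 u v :: real
          assume h: "nonneg (y + (g - t1) *\<^sub>R d)" "nonneg (y + (g - t2) *\<^sub>R d)" "0 \<le> u" "0 \<le> v" "u + v = 1"
          have "y + (g - (u *\<^sub>R t1 + v *\<^sub>R t2)) *\<^sub>R d = u *\<^sub>R (y + (g - t1) *\<^sub>R d) + v *\<^sub>R (y + (g - t2) *\<^sub>R d)"
          proof -
            have "u *\<^sub>R (y + (g - t1) *\<^sub>R d) + v *\<^sub>R (y + (g - t2) *\<^sub>R d)
                = (u + v) *\<^sub>R y + ((u + v) * g - (u * t1 + v * t2)) *\<^sub>R d"
              by (simp add: algebra_simps)
            then show ?thesis using h(5) by simp
          qed
          then show "nonneg (y + (g - (u *\<^sub>R t1 + v *\<^sub>R t2)) *\<^sub>R d)" using nonneg_comb[OF h(1,2,3,4)] by simp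
        qed
      qed
      have clT: "closed T"
      proof (cases "d = 0")
        case True then show ?thesis unfolding T_def by simp
      next
        case False
        have "{t. nonneg (y + (g - t) *\<^sub>R d)} = (\<Inter>i. {t. 0 \<le> y $ i + (g - t) * d $ i})"
          unfolding nonneg_def by auto
        moreover have "closed {t. 0 \<le> y $ i + (g - t) * d $ i}" for i
          by (intro closed_Collect_le continuous_intros)
        ultimately show ?thesis unfolding T_def using False by (simp add: closed_INT)
      qed
      have H_eq: "(\<lambda>u. L1 u + c1) ` S = H"
      proof
        show "(\<lambda>u. L1 u + c1) ` S \<subseteq> H"
        proof
          fix q assume "q \<in> (\<lambda>u. L1 u + c1) ` S"
          then obtain u where u: "u \<in> S" "q = (u, y + (g - a \<bullet> u) *\<^sub>R d)" using phi by auto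
          have uA: "A *v u = cA" "nonneg u" "a \<bullet> u \<in> T" using u(1) unfolding S_def PA_def std_poly_def by auto
          have y0: "B *v y = cB" "nonneg y" "a \<bullet> x + b \<bullet> y = c"
            using vertex_in[OF vxy(1)] unfolding R_def c_def by (simp_all add: R_mem)
          let ?w = "y + (g - a \<bullet> u) *\<^sub>R d"
          have "B *v ?w = cB" using y0 d(1) by (simp add: matrix_vector_right_distrib matrix_vector_mult_scaleR)
          moreover have "supp ?w \<subseteq> supp y" using supp_add[of y] supp_scale[of _ d] d(2) by blast
          moreover have "nonneg ?w \<and> a \<bullet> u + b \<bullet> ?w = c"
          proof (cases "d = 0")
            case True
            then have "a \<bullet> u = g" using uA(3) unfolding T_def by simp
            then show ?thesis using True y0 unfolding g_def by simp
          next
            case False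
            then have "b \<bullet> d = 1" using d(3) by simp
            moreover have "nonneg ?w" using uA(3) False unfolding T_def by simp
            ultimately show ?thesis unfolding g_def by (simp add: inner_add_right algebra_simps)
          qed
          ultimately show "q \<in> H" using u(2) uA unfolding H_def R_def c_def by (simp add: R_mem)
        qed
      next
        show "H \<subseteq> (\<lambda>u. L1 u + c1) ` S"
        proof
          fix q assume q: "q \<in> H"
          obtain u w where uw: "q = (u, w)" by (cases q)
          have h: "A *v u = cA" "a \<bullet> u + b \<bullet> w = c" "B *v w = cB" "nonneg u" "nonneg w" "supp w \<subseteq> supp y"
            using q unfolding uw H_def R_def c_def by (simp_all add: R_mem)
          have y0: "B *v y = cB" using vertex_in[OF vxy(1)] unfolding R_def by (simp add: R_mem)
          have e: "w - y = (b \<bullet> (w - y)) *\<^sub>R d"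
            by (rule d(4)) (use h y0 supp_diff[of w y] in \<open>auto simp: matrix_vector_mult_diff_distrib\<close>)
          have weq: "w = y + (g - a \<bullet> u) *\<^sub>R d \<and> a \<bullet> u \<in> T"
          proof (cases "d = 0")
            case True
            then have "w = y" using e by simp
            then show ?thesis using True h(2) unfolding T_def g_def by simp
          next
            case False
            then have bd: "b \<bullet> d = 1" using d(3) by simp
            have "b \<bullet> (w - y) = g - a \<bullet> u" using h(2) unfolding g_def by (simp add: inner_diff_right)
            then have "w - y = (g - a \<bullet> u) *\<^sub>R d" using e by simp
            then have w: "w = y + (g - a \<bullet> u) *\<^sub>R d" by (metis diff_add_cancel add.commute)
            then show ?thesis using h(5) False unfolding T_def by simp
          qed
          have "u \<in> S" using h(1,4) weq unfolding S_def PA_def std_poly_def by simp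
          then show "q \<in> (\<lambda>u. L1 u + c1) ` S" using uw weq phi by (auto intro!: image_eqI[of _ _ u])
        qed
      qed
      have HF: "H face_of R" unfolding H_def R_def by (rule face_supp_snd)
      have SF: "(\<lambda>u. L1 u + c1) ` S face_of R" using HF H_eq by simp
      have xH: "(x, y) \<in> H" using vertex_in[OF vxy(1)] unfolding H_def by simp
      have zH: "(x', z) \<in> H"
      proof -
        have "A *v x' = cA" "nonneg x'" using vertex_in[OF vxy'(2)] unfolding PA_def std_poly_def by auto
        then show ?thesis using z unfolding H_def R_def c_def by (simp add: R_mem)
      qed
      obtain u0 where u0: "u0 \<in> S" "L1 u0 + c1 = (x, y)" using xH H_eq by force
      have xS: "x \<in> S" and phx: "L1 x + c1 = (x, y)" using u0 phi by (metis fst_conv)+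
      obtain u1 where u1: "u1 \<in> S" "L1 u1 + c1 = (x', z)" using zH H_eq by force
      have xS': "x' \<in> S" and phx': "L1 x' + c1 = (x', z)" using u1 phi by (metis fst_conv)+
      have "edge_dist PA x x' \<le> enat kA" using dist_le_comb_diam[OF vxy(2) vxy'(2)] fin(1) by simp
      then obtain k where k: "k \<le> kA" "edge_walk PA k x x'" using edge_dist_walk by blast
      have slices: "edge_dist (PA \<inter> {u. a \<bullet> u = g'}) q q' \<le> enat DA"
        if "g' \<in> T" "vertex_of q (PA \<inter> {u. a \<bullet> u = g'})" "vertex_of q' (PA \<inter> {u. a \<bullet> u = g'})" for g' q q'
      proof -
        have eq: "PA \<inter> {u. a \<bullet> u = g'} = std_poly (stack_row A a) (rhs g' cA)"
          by (subst std_poly_stack) (auto simp: PA_def std_poly_def)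
        show ?thesis using dist_le_comb_diam[OF that(2,3)] comb_le_mat[of "stack_row A a" "rhs g' cA"] fin(2)
          unfolding eq by (metis order_trans)
      qed
      have S_def': "S = {u \<in> PA. a \<bullet> u \<in> T}" by (rule S_def)
      have dS: "edge_dist S x x' \<le> enat (k + 2 * DA)"
        by (rule slab_dist[OF cPA cT clT S_def' k(2) xS xS' slices])
      have d1: "edge_dist R (x, y) (x', z) \<le> enat (kA + 2 * DA)"
      proof -
        have "edge_dist R (L1 x + c1) (L1 x' + c1) \<le> edge_dist S x x'" by (rule dist_affine[OF linL1 injL1 SF])
        also have "\<dots> \<le> enat (kA + 2 * DA)" by (rule order_trans[OF dS]) (use k(1) in simp)
        finally show ?thesis using phx phx' by simp
      qed
      define Q where "Q = std_poly (stack_row B b) (rhs (c - a \<bullet> x') cB)"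
      define L2 where "L2 = (\<lambda>w::real^'n2. ((0::real^'n1), w))"
      define c2 where "c2 = (x', (0::real^'n2))"
      define G where "G = {q \<in> R. supp (fst q) \<subseteq> supp x'}"
      have linL2: "linear L2" unfolding L2_def linear_iff by simp
      have injL2: "inj L2" unfolding L2_def inj_def by simp
      have psi: "L2 w + c2 = (x', w)" for w unfolding L2_def c2_def by simp
      have x'A: "A *v x' = cA" "nonneg x'" using vertex_in[OF vxy'(2)] unfolding PA_def std_poly_def by auto
      have G_eq: "(\<lambda>w. L2 w + c2) ` Q = G"
      proof
        show "(\<lambda>w. L2 w + c2) ` Q \<subseteq> G"
          using x'A unfolding psi Q_def std_poly_stack G_def R_def c_def by (auto simp: R_mem)
      next
        show "G \<subseteq> (\<lambda>w. L2 w + c2) ` Q"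
        proof
          fix q assume q: "q \<in> G"
          obtain u w where uw: "q = (u, w)" by (cases q)
          have h: "A *v u = cA" "a \<bullet> u + b \<bullet> w = c" "B *v w = cB" "nonneg u" "nonneg w" "supp u \<subseteq> supp x'"
            using q unfolding uw G_def R_def c_def by (simp_all add: R_mem)
          have "u = x'" by (rule vertex_std_unique[OF vxy'(2)[unfolded PA_def]]) (use h in \<open>simp_all add: std_poly_def\<close>)
          then have "w \<in> Q" using h unfolding Q_def std_poly_stack by simp
          then show "q \<in> (\<lambda>w. L2 w + c2) ` Q" using uw \<open>u = x'\<close> psi by auto
        qed
      qed
      have GF: "G face_of R" unfolding G_def R_def by (rule face_supp_fst)
      have QF: "(\<lambda>w. L2 w + c2) ` Q face_of R" using GF G_eq by simp
      have vzR: "vertex_of (x', z) R"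
      proof -
        have "vertex_of x' S" using vertex_subset[OF vxy'(2) xS'] unfolding S_def by auto
        then have "vertex_of (L1 x' + c1) ((\<lambda>u. L1 u + c1) ` S)" using vertex_affine[OF linL1 injL1] by blast
        then show ?thesis using vertex_face[OF SF] phx' by simp
      qed
      have vQ: "vertex_of w Q" if "vertex_of (x', w) R" for w
      proof -
        have "(x', w) \<in> G" using vertex_in[OF that] unfolding G_def by simp
        then have "vertex_of (x', w) G" using vertex_face_iff[OF GF] that by blast
        then have "vertex_of (L2 w + c2) ((\<lambda>w. L2 w + c2) ` Q)" using G_eq psi by simp
        then show ?thesis using vertex_affine[OF linL2 injL2] by blast
      qed
      have d2: "edge_dist R (x', z) (x', y') \<le> enat DB"
      proof -
        have "edge_dist R (L2 z + c2) (L2 y' + c2) \<le> edge_dist Q z y'" by (rule dist_affine[OF linL2 injL2 QF])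
        also have "\<dots> \<le> comb_diam Q" by (rule dist_le_comb_diam[OF vQ[OF vzR] vQ[OF vxy'(1)]])
        also have "\<dots> \<le> mat_diam (stack_row B b)" unfolding Q_def by (rule comb_le_mat)
        finally show ?thesis using psi fin(3) by simp
      qed
      have "edge_dist R (x, y) (x', y') \<le> edge_dist R (x, y) (x', z) + edge_dist R (x', z) (x', y')"
        by (rule edge_dist_tri)
      also have "\<dots> \<le> enat (kA + 2 * DA) + enat DB" using d1 d2 by (rule add_mono)
      finally show ?thesis by simp
    qed
    have "enat (kA + 2 * DA + DB) \<le> enat kA + 2 * enat DA + enat DB + 2"
      by (simp add: numeral_eq_enat)
    then show ?thesis using main fin unfolding R_def PA_def by simp
  qed
qed


end
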